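(* Let $\alpha\in(0,1)$ be a constant, $k\ge1$ and $\epsilon\in(0,1)$. Suppose it is promised that $p_i\le \epsilon^2/n^\alpha$ for all $i\in[n]$. Then there is a randomized one-pass streaming algorithm (strict turnstile model, constant success probability) that uses $\tilde O\left(n^{1-\alpha}\cdot k\cdot\log(n/\epsilon)\right)$ space and outputs $f\in H_k$ such that $err_P(f)\le\min_{f^*\in H_k}err_P(f^* )+\epsilon$.
   Context: Strict turnstile model: the stream consists of insertions and deletions of elements of $[n]=\{1,\dots,n\}$ such that at every point each element has been inserted at least as many times as it has been deleted; the stream length is polynomial in $n$. Let $m_i\ge 0$ be the final count of $i$, $m=\sum_i m_i>0$, and $P=(p_1,\dots,p_n)$ with $p_i=m_i/m$; $\mathrm{supp}(P)=\{i:p_i>0\}$. A $k$-piece histogram is a function $f:[n]\to[0,1]$ given by delimiters $0=i_0\le i_1\le\dots\le i_{k-1}\le i_k=n$ and values $\gamma_1,\dots,\gamma_k\in[0,1]$, with $f(i)=\gamma_j$ for $i\in\{i_{j-1}+1,\dots,i_j\}$. $H_k$ is the set of all $k$-piece histograms over $[n]$. The support-aware $L_1$ error is $err_P(f)=\sum_{i\in\mathrm{supp}(P)}|p_i-f(i)|$. $\tilde O$ hides factors polylogarithmic in its argument. *)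

theory Defs
  imports "HOL-Probability.Probability"
begin

text \<open>A stream update is a pair (item, is_insertion). True = insertion, False = deletion.\<close>
type_synonym update = "nat \<times> bool"

definition cnt :: "update list \<Rightarrow> nat \<Rightarrow> int" where
  "cnt s i = int (length (filter (\<lambda>u. u = (i, True)) s))
           - int (length (filter (\<lambda>u. u = (i, False)) s))"

definition valid_stream :: "nat \<Rightarrow> update list \<Rightarrow> bool" where
  "valid_stream n s \<longleftrightarrow> (\<forall>u\<in>set s. fst u \<in> {1..n})
      \<and> (\<forall>j\<le>length s. \<forall>i. 0 \<le> cnt (take j s) i)"

definition mtot :: "nat \<Rightarrow> update list \<Rightarrow> int" where
  "mtot n s = (\<Sum>i=1..n. cnt s i)"

definition pvec :: "nat \<Rightarrow> update list \<Rightarrow> nat \<Rightarrow> real" where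
  "pvec n s i = real_of_int (cnt s i) / real_of_int (mtot n s)"

definition hist_set :: "nat \<Rightarrow> nat \<Rightarrow> (nat \<Rightarrow> real) set" where
  "hist_set n k = {f. (\<exists>(d::nat \<Rightarrow> nat) (g::nat \<Rightarrow> real).
        d 0 = 0 \<and> d k = n \<and> (\<forall>j<k. d j \<le> d (Suc j))
        \<and> (\<forall>j\<in>{1..k}. 0 \<le> g j \<and> g j \<le> 1)
        \<and> (\<forall>j\<in>{1..k}. \<forall>x\<in>{d (j - 1) + 1 .. d j}. f x = g j))
      \<and> (\<forall>x. x \<notin> {1..n} \<longrightarrow> f x = 0)}"

definition err :: "nat \<Rightarrow> (nat \<Rightarrow> real) \<Rightarrow> (nat \<Rightarrow> real) \<Rightarrow> real" where
  "err n P f = (\<Sum>i\<in>{i\<in>{1..n}. 0 < P i}. \<bar>P i - f i\<bar>)"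

definition opt_err :: "nat \<Rightarrow> nat \<Rightarrow> (nat \<Rightarrow> real) \<Rightarrow> real" where
  "opt_err n k P = Inf (err n P ` hist_set n k)"

record salg =
  s_init :: "bool list pmf"
  s_upd  :: "update \<Rightarrow> bool list \<Rightarrow> bool list pmf"
  s_out  :: "bool list \<Rightarrow> (nat \<Rightarrow> real) pmf"

definition run :: "salg \<Rightarrow> update list \<Rightarrow> bool list pmf" where
  "run A s = foldl (\<lambda>M u. bind_pmf M (s_upd A u)) (s_init A) s"

definition alg_output :: "salg \<Rightarrow> update list \<Rightarrow> (nat \<Rightarrow> real) pmf" where
  "alg_output A s = bind_pmf (run A s) (s_out A)"

text \<open>Space: every memory state reachable with positive probability on any valid stream
  of length at most L has at most S bits (prefixes of valid streams are valid).\<close>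
definition space_bounded :: "salg \<Rightarrow> nat \<Rightarrow> nat \<Rightarrow> real \<Rightarrow> bool" where
  "space_bounded A n L S \<longleftrightarrow> (\<forall>s. valid_stream n s \<and> length s \<le> L \<longrightarrow>
      (\<forall>\<sigma>\<in>set_pmf (run A s). real (length \<sigma>) \<le> S))"

end

theory Submission
  imports Defs
begin

fun bval :: "bool list \<Rightarrow> nat" where
  "bval [] = 0"
| "bval (b#bs) = of_bool b + 2 * bval bs"

definition bits :: "nat \<Rightarrow> nat \<Rightarrow> bool list" where
  "bits w x = map (bit x) [0..<w]"

lemma bits_Suc: "bits (Suc w) x = odd x # bits w (x div 2)"
  unfolding bits_def by (simp add: map_upt_Suc bit_Suc bit_0 del: upt_Suc)

lemma length_bits[simp]: "length (bits w x) = w"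
  by (simp add: bits_def)

lemma bval_bits: "x < 2^w \<Longrightarrow> bval (bits w x) = x"
proof (induction w arbitrary: x)
  case 0 then show ?case by (simp add: bits_def)
next
  case (Suc w)
  have "x div 2 < 2^w" using Suc.prems by auto
  then show ?case using Suc.IH by (simp add: bits_Suc)
qed

definition enc :: "nat \<Rightarrow> nat list \<Rightarrow> bool list" where
  "enc w xs = concat (map (bits w) xs)"

lemma length_enc[simp]: "length (enc w xs) = w * length xs"
  by (induction xs) (auto simp: enc_def)

lemma enc_inj:
  assumes "length xs = length ys" "\<forall>x\<in>set xs. x < 2^w" "\<forall>x\<in>set ys. x < 2^w"
    "enc w xs = enc w ys"
  shows "xs = ys"
  using assms
proof (induction xs arbitrary: ys)
  case Nil then show ?case by simp
next
  case (Cons x xs)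
  then obtain y ys' where ys: "ys = y # ys'" by (cases ys) auto
  have "bits w x @ enc w xs = bits w y @ enc w ys'"
    using Cons.prems(4) by (simp add: ys enc_def)
  then have "bits w x = bits w y" "enc w xs = enc w ys'"
    by (auto simp: append_eq_append_conv)
  then have "x = y" using Cons.prems bval_bits ys by (metis list.set_intros(1))
  moreover have "xs = ys'" using Cons.IH[of ys'] Cons.prems ys \<open>enc w xs = enc w ys'\<close> by auto
  ultimately show ?case using ys by simp
qed

definition dec :: "nat \<Rightarrow> nat \<Rightarrow> bool list \<Rightarrow> nat list" where
  "dec w r \<sigma> = (SOME xs. length xs = r \<and> (\<forall>x\<in>set xs. x < 2^w) \<and> enc w xs = \<sigma>)"

lemma dec_enc:
  assumes "length xs = r" "\<forall>x\<in>set xs. x < 2^w"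
  shows "dec w r (enc w xs) = xs"
proof -
  have "\<exists>ys. length ys = r \<and> (\<forall>x\<in>set ys. x < 2^w) \<and> enc w ys = enc w xs" using assms by blast
  then have "length (dec w r (enc w xs)) = r \<and> (\<forall>x\<in>set (dec w r (enc w xs)). x < 2^w)
     \<and> enc w (dec w r (enc w xs)) = enc w xs"
    unfolding dec_def by (rule someI_ex)
  then show ?thesis using enc_inj assms by metis
qed

definition insc :: "update list \<Rightarrow> nat \<Rightarrow> nat" where
  "insc s a = length (filter (\<lambda>u. u = (a, True)) s)"
definition delc :: "update list \<Rightarrow> nat \<Rightarrow> nat" where
  "delc s a = length (filter (\<lambda>u. u = (a, False)) s)"
definition TI :: "update list \<Rightarrow> nat" where
  "TI s = length (filter snd s)"
definition TD :: "update list \<Rightarrow> nat" where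
  "TD s = length (filter (\<lambda>u. \<not> snd u) s)"

definition lay :: "nat \<Rightarrow> (nat \<Rightarrow> nat list) \<Rightarrow> update list \<Rightarrow> nat list" where
  "lay t \<omega> s = TI s # TD s # concat (map (\<lambda>a. [a, insc s a, delc s a]) (concat (map \<omega> [0..<t])))"

fun updT :: "update \<Rightarrow> nat list \<Rightarrow> nat list" where
  "updT u (a#x#y#r) = a # (if u = (a,True) then Suc x else x) # (if u = (a,False) then Suc y else y) # updT u r"
| "updT u r = r"

fun upd :: "update \<Rightarrow> nat list \<Rightarrow> nat list" where
  "upd u (p#q#r) = (if snd u then Suc p else p) # (if snd u then q else Suc q) # updT u r"
| "upd u r = r"

lemma updT_concat: "updT u (concat (map (\<lambda>a. [a, insc s a, delc s a]) zs))
   = concat (map (\<lambda>a. [a, insc (s@[u]) a, delc (s@[u]) a]) zs)"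
  by (induction zs) (auto simp: insc_def delc_def)

lemma upd_lay: "upd u (lay t \<omega> s) = lay t \<omega> (s @ [u])"
  by (simp add: lay_def updT_concat TI_def TD_def)

lemma length_concat3: "length (concat (map (\<lambda>a. [a, f a, g a]) zs)) = 3 * length zs"
  by (induction zs) auto

lemma length_lay: "length (lay t \<omega> s) = 2 + 3 * length (concat (map \<omega> [0..<t]))"
  unfolding lay_def by (simp add: length_concat3)

lemma set_concat3: "x \<in> set (concat (map (\<lambda>a. [a, f a, g a]) zs)) \<Longrightarrow> \<exists>a\<in>set zs. x = a \<or> x = f a \<or> x = g a"
  by (induction zs) auto

lemma lay_bounded:
  assumes "\<forall>a\<in>set (concat (map \<omega> [0..<t])). a < B" "length s < B"
  shows "\<forall>x\<in>set (lay t \<omega> s). x < B"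
proof
  fix x assume x: "x \<in> set (lay t \<omega> s)"
  have b: "insc s a < B" "delc s a < B" "TI s < B" "TD s < B" for a
    using assms(2) by (auto simp: insc_def delc_def TI_def TD_def intro: le_less_trans[OF length_filter_le])
  show "x < B"
  proof (cases "x = TI s \<or> x = TD s")
    case True then show ?thesis using b by auto
  next
    case False
    then have "x \<in> set (concat (map (\<lambda>a. [a, insc s a, delc s a]) (concat (map \<omega> [0..<t]))))"
      using x by (simp add: lay_def)
    then obtain a where "a \<in> set (concat (map \<omega> [0..<t]))" "x = a \<or> x = insc s a \<or> x = delc s a"
      using set_concat3 by metis
    then show ?thesis using b assms(1) by blast
  qed
qed

definition mkalg :: "nat \<Rightarrow> nat \<Rightarrow> nat \<Rightarrow> (nat \<Rightarrow> nat list) pmf \<Rightarrow> (nat list \<Rightarrow> (nat \<Rightarrow> real)) \<Rightarrow> salg" where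
  "mkalg w r t \<Omega> OUTF = \<lparr> s_init = map_pmf (\<lambda>\<omega>. enc w (lay t \<omega> [])) \<Omega>,
      s_upd = (\<lambda>u \<sigma>. return_pmf (enc w (upd u (dec w r \<sigma>)))),
      s_out = (\<lambda>\<sigma>. return_pmf (OUTF (dec w r \<sigma>))) \<rparr>"

lemma bind_map_return: "bind_pmf (map_pmf g M) (\<lambda>\<sigma>. return_pmf (h \<sigma>)) = map_pmf (\<lambda>x. h (g x)) M"
  by (simp add: map_pmf_def bind_assoc_pmf bind_return_pmf)

lemma run_snoc: "run A (s @ [u]) = bind_pmf (run A s) (s_upd A u)"
  by (simp add: run_def)

lemma mkalg_simps:
  "s_init (mkalg w r t \<Omega> OUTF) = map_pmf (\<lambda>\<omega>. enc w (lay t \<omega> [])) \<Omega>"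
  "s_upd (mkalg w r t \<Omega> OUTF) = (\<lambda>u \<sigma>. return_pmf (enc w (upd u (dec w r \<sigma>))))"
  "s_out (mkalg w r t \<Omega> OUTF) = (\<lambda>\<sigma>. return_pmf (OUTF (dec w r \<sigma>)))"
  unfolding mkalg_def by simp_all

lemma dec_lay:
  assumes "\<forall>\<omega>\<in>set_pmf \<Omega>. length (concat (map \<omega> [0..<t])) = R \<and> (\<forall>a\<in>set (concat (map \<omega> [0..<t])). a < 2^w)"
    "r = 2 + 3 * R" "length s < 2^w" "\<omega> \<in> set_pmf \<Omega>"
  shows "dec w r (enc w (lay t \<omega> s)) = lay t \<omega> s"
proof -
  have len: "length (lay t \<omega> s) = r" using assms by (simp add: length_lay)
  have "\<forall>a\<in>set (concat (map \<omega> [0..<t])). a < 2^w" using assms(1,4) by blast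
  then have bnd: "\<forall>x\<in>set (lay t \<omega> s). x < 2^w" using lay_bounded assms(3) by blast
  show ?thesis by (rule dec_enc[OF len bnd])
qed

lemma run_mkalg:
  assumes "\<forall>\<omega>\<in>set_pmf \<Omega>. length (concat (map \<omega> [0..<t])) = R \<and> (\<forall>a\<in>set (concat (map \<omega> [0..<t])). a < 2^w)"
    "r = 2 + 3 * R" "length s < 2^w"
  shows "run (mkalg w r t \<Omega> OUTF) s = map_pmf (\<lambda>\<omega>. enc w (lay t \<omega> s)) \<Omega>"
  using assms(3)
proof (induction s rule: rev_induct)
  case Nil then show ?case by (simp add: run_def mkalg_simps)
next
  case (snoc u s)
  have IH: "run (mkalg w r t \<Omega> OUTF) s = map_pmf (\<lambda>\<omega>. enc w (lay t \<omega> s)) \<Omega>"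
    using snoc by simp
  have "run (mkalg w r t \<Omega> OUTF) (s @ [u]) = bind_pmf (map_pmf (\<lambda>\<omega>. enc w (lay t \<omega> s)) \<Omega>)
     (\<lambda>\<sigma>. return_pmf (enc w (upd u (dec w r \<sigma>))))"
    unfolding run_snoc IH mkalg_simps ..
  also have "\<dots> = map_pmf (\<lambda>\<omega>. enc w (upd u (dec w r (enc w (lay t \<omega> s))))) \<Omega>"
    by (rule bind_map_return)
  also have "\<dots> = map_pmf (\<lambda>\<omega>. enc w (lay t \<omega> (s @ [u]))) \<Omega>"
  proof (intro pmf.map_cong refl)
    fix \<omega> assume "\<omega> \<in> set_pmf \<Omega>"
    then have "dec w r (enc w (lay t \<omega> s)) = lay t \<omega> s"
      using assms snoc.prems by (intro dec_lay[of \<Omega> t R w]) auto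
    then show "enc w (upd u (dec w r (enc w (lay t \<omega> s)))) = enc w (lay t \<omega> (s @ [u]))"
      by (simp add: upd_lay)
  qed
  finally show ?case .
qed

lemma output_mkalg:
  assumes "\<forall>\<omega>\<in>set_pmf \<Omega>. length (concat (map \<omega> [0..<t])) = R \<and> (\<forall>a\<in>set (concat (map \<omega> [0..<t])). a < 2^w)"
    "r = 2 + 3 * R" "length s < 2^w"
  shows "alg_output (mkalg w r t \<Omega> OUTF) s = map_pmf (\<lambda>\<omega>. OUTF (lay t \<omega> s)) \<Omega>"
proof -
  have "alg_output (mkalg w r t \<Omega> OUTF) s = map_pmf (\<lambda>\<omega>. OUTF (dec w r (enc w (lay t \<omega> s)))) \<Omega>"
    unfolding alg_output_def run_mkalg[OF assms] mkalg_simps by (rule bind_map_return)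
  also have "\<dots> = map_pmf (\<lambda>\<omega>. OUTF (lay t \<omega> s)) \<Omega>"
  proof (intro pmf.map_cong refl)
    fix \<omega> assume "\<omega> \<in> set_pmf \<Omega>"
    then show "OUTF (dec w r (enc w (lay t \<omega> s))) = OUTF (lay t \<omega> s)"
      using dec_lay[OF assms \<open>\<omega> \<in> set_pmf \<Omega>\<close>] by simp
  qed
  finally show ?thesis .
qed

lemma space_mkalg:
  assumes "\<forall>\<omega>\<in>set_pmf \<Omega>. length (concat (map \<omega> [0..<t])) = R \<and> (\<forall>a\<in>set (concat (map \<omega> [0..<t])). a < 2^w)"
    "r = 2 + 3 * R" "L < 2^w" "real (w * r) \<le> S"
  shows "space_bounded (mkalg w r t \<Omega> OUTF) n L S"
  unfolding space_bounded_def
proof (intro allI impI ballI)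
  fix s \<sigma> assume "valid_stream n s \<and> length s \<le> L" "\<sigma> \<in> set_pmf (run (mkalg w r t \<Omega> OUTF) s)"
  then have "length s < 2^w" using assms by auto
  then obtain \<omega> where "\<omega> \<in> set_pmf \<Omega>" "\<sigma> = enc w (lay t \<omega> s)"
    using run_mkalg[OF assms(1,2)] \<open>\<sigma> \<in> _\<close> by auto
  then show "real (length \<sigma>) \<le> S" using assms by (simp add: length_lay)
qed

definition LS :: "nat set \<Rightarrow> nat \<Rightarrow> nat list set" where
  "LS U m = {xs. set xs \<subseteq> U \<and> length xs = m}"

lemma finite_LS: "finite U \<Longrightarrow> finite (LS U m)"
  by (simp add: LS_def finite_lists_length_eq)

lemma card_LS: "finite U \<Longrightarrow> card (LS U m) = card U ^ m"
  by (simp add: LS_def card_lists_length_eq)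

lemma sum_LS_Suc:
  fixes h :: "nat list \<Rightarrow> real"
  assumes "finite U"
  shows "(\<Sum>xs\<in>LS U (Suc m). h xs) = (\<Sum>x\<in>U. \<Sum>xs\<in>LS U m. h (x#xs))"
proof -
  have "(\<Sum>xs\<in>LS U (Suc m). h xs) = (\<Sum>p\<in>LS U m \<times> U. h (snd p # fst p))"
    unfolding LS_def lists_length_Suc_eq
    by (subst sum.reindex) (auto simp: inj_on_def case_prod_unfold)
  also have "\<dots> = (\<Sum>xs\<in>LS U m. \<Sum>x\<in>U. h (x#xs))"
    by (simp add: sum.cartesian_product case_prod_unfold)
  also have "\<dots> = (\<Sum>x\<in>U. \<Sum>xs\<in>LS U m. h (x#xs))"
    by (rule sum.swap)
  finally show ?thesis .
qed

lemma sum_S: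
  fixes Y :: "nat \<Rightarrow> real"
  assumes "finite U" "sum Y U = 0"
  shows "(\<Sum>xs\<in>LS U m. sum_list (map Y xs)) = 0"
proof (induction m)
  case 0 then show ?case by (simp add: LS_def)
next
  case (Suc m)
  have "(\<Sum>xs\<in>LS U (Suc m). sum_list (map Y xs)) = (\<Sum>x\<in>U. \<Sum>xs\<in>LS U m. Y x + sum_list (map Y xs))"
    by (simp add: sum_LS_Suc assms)
  also have "\<dots> = (\<Sum>x\<in>U. real (card (LS U m)) * Y x)"
    by (simp add: sum.distrib Suc)
  also have "\<dots> = 0" by (simp add: sum_distrib_left[symmetric] assms)
  finally show ?case .
qed

lemma sum_S2:
  fixes Y :: "nat \<Rightarrow> real"
  assumes "finite U" "sum Y U = 0"
  shows "(\<Sum>xs\<in>LS U m. (sum_list (map Y xs))^2) = real m * real (card U) ^ (m - 1) * (\<Sum>u\<in>U. (Y u)^2)"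
proof (induction m)
  case 0 then show ?case by (simp add: LS_def)
next
  case (Suc m)
  let ?V = "\<Sum>u\<in>U. (Y u)^2"
  have "(\<Sum>xs\<in>LS U (Suc m). (sum_list (map Y xs))^2)
      = (\<Sum>x\<in>U. \<Sum>xs\<in>LS U m. (Y x)^2 + 2 * Y x * sum_list (map Y xs) + (sum_list (map Y xs))^2)"
    by (simp add: sum_LS_Suc assms power2_sum add_ac)
  also have "\<dots> = (\<Sum>x\<in>U. real (card (LS U m)) * (Y x)^2 + 2 * Y x * (\<Sum>xs\<in>LS U m. sum_list (map Y xs))
        + real m * real (card U) ^ (m - 1) * ?V)"
    by (simp add: sum.distrib Suc sum_distrib_left[symmetric])
  also have "\<dots> = real (card U) ^ m * ?V + real (card U) * (real m * real (card U) ^ (m - 1) * ?V)"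
    using sum_S[OF assms, of m] by (simp add: sum.distrib sum_distrib_left[symmetric] card_LS assms)
  also have "\<dots> = real (Suc m) * real (card U) ^ (Suc m - 1) * ?V"
    by (cases m) (simp_all add: algebra_simps)
  finally show ?case .
qed

lemma cheb_count:
  fixes g :: "'a \<Rightarrow> real"
  assumes "finite A" "0 < \<tau>"
  shows "real (card {x\<in>A. \<tau> \<le> \<bar>g x\<bar>}) * \<tau>^2 \<le> (\<Sum>x\<in>A. (g x)^2)"
proof -
  have "real (card {x\<in>A. \<tau> \<le> \<bar>g x\<bar>}) * \<tau>^2 = (\<Sum>x\<in>{x\<in>A. \<tau> \<le> \<bar>g x\<bar>}. \<tau>^2)" by simp
  also have "\<dots> \<le> (\<Sum>x\<in>{x\<in>A. \<tau> \<le> \<bar>g x\<bar>}. (g x)^2)"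
  proof (intro sum_mono)
    fix x assume "x \<in> {x\<in>A. \<tau> \<le> \<bar>g x\<bar>}"
    then have "\<tau>^2 \<le> \<bar>g x\<bar>^2" using assms by (intro power_mono) auto
    then show "\<tau>^2 \<le> (g x)^2" by simp
  qed
  also have "\<dots> \<le> (\<Sum>x\<in>A. (g x)^2)" by (intro sum_mono2 assms) auto
  finally show ?thesis .
qed

lemma est_count:
  fixes a :: "nat \<Rightarrow> real"
  assumes "1 \<le> n" "1 \<le> m" "0 < \<tau>" "\<And>u. u \<in> {1..n} \<Longrightarrow> 0 \<le> a u \<and> a u \<le> \<delta>"
  defines "E \<equiv> (\<Sum>u\<in>{1..n}. a u)"
  shows "real (card {xs\<in>LS {1..n} m. \<tau> \<le> \<bar>real n / real m * sum_list (map a xs) - E\<bar>}) * \<tau>^2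
     \<le> real n ^ m * (real n * \<delta> * E / real m)"
proof -
  define Y where "Y u = a u - E / real n" for u
  have sY: "sum Y {1..n} = 0" using assms(1) by (simp add: Y_def sum_subtractf E_def)
  have eq: "real n / real m * sum_list (map a xs) - E = real n / real m * sum_list (map Y xs)"
    if "xs \<in> LS {1..n} m" for xs
  proof -
    have "sum_list (map Y xs) = sum_list (map a xs) - real (length xs) * (E / real n)"
      unfolding Y_def by (induction xs) (auto simp: algebra_simps)
    then show ?thesis using that assms(1,2) by (simp add: LS_def field_simps)
  qed
  have V: "(\<Sum>u\<in>{1..n}. (Y u)^2) \<le> \<delta> * E"
  proof -
    define c where "c = E / real n"
    have c2: "(\<Sum>u\<in>{1..n}. 2 * a u * c) = 2 * c * E"
      by (simp add: E_def sum_distrib_left mult_ac)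
    have "(\<Sum>u\<in>{1..n}. (Y u)^2) = (\<Sum>u\<in>{1..n}. (a u)^2 - 2 * a u * c + c^2)"
      by (intro sum.cong refl) (simp add: Y_def c_def power2_diff)
    also have "\<dots> = (\<Sum>u\<in>{1..n}. (a u)^2) - 2 * c * E + real n * c^2"
      unfolding sum.distrib sum_subtractf c2 by simp
    also have "\<dots> = (\<Sum>u\<in>{1..n}. (a u)^2) - E^2 / real n"
      using assms(1) by (simp add: c_def field_simps power2_eq_square)
    finally have "(\<Sum>u\<in>{1..n}. (Y u)^2) = (\<Sum>u\<in>{1..n}. (a u)^2) - E^2 / real n" .
    also have "\<dots> \<le> (\<Sum>u\<in>{1..n}. (a u)^2)" by simp
    also have "\<dots> \<le> (\<Sum>u\<in>{1..n}. \<delta> * a u)"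
      using assms(4) by (intro sum_mono) (simp add: power2_eq_square mult_right_mono)
    finally show ?thesis by (simp add: E_def sum_distrib_left)
  qed
  have "real (card {xs\<in>LS {1..n} m. \<tau> \<le> \<bar>real n / real m * sum_list (map a xs) - E\<bar>}) * \<tau>^2
      \<le> (\<Sum>xs\<in>LS {1..n} m. (real n / real m * sum_list (map a xs) - E)^2)"
    by (rule cheb_count[OF finite_LS assms(3)]) simp
  also have "\<dots> = (\<Sum>xs\<in>LS {1..n} m. (real n / real m)^2 * (sum_list (map Y xs))^2)"
    by (intro sum.cong refl) (simp only: eq power_mult_distrib)
  also have "\<dots> = (real n / real m)^2 * (real m * real n ^ (m - 1) * (\<Sum>u\<in>{1..n}. (Y u)^2))"
    using sum_S2[OF _ sY, of m] by (simp add: sum_distrib_left[symmetric])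
  also have "\<dots> \<le> (real n / real m)^2 * (real m * real n ^ (m - 1) * (\<delta> * E))"
    by (intro mult_left_mono V) auto
  also have "\<dots> = real n ^ m * (real n * \<delta> * E / real m)"
  proof -
    have "real n ^ m = real n * real n ^ (m - 1)" using assms(2)
      by (metis Suc_diff_le diff_Suc_1 power_Suc)
    then show ?thesis using assms(2) by (simp add: power2_eq_square field_simps)
  qed
  finally show ?thesis .
qed

lemma prod_if_card:
  fixes x y :: real
  assumes "B \<subseteq> {..<t}"
  shows "(\<Prod>c\<in>{..<t}. if c \<in> B then x else y) = x ^ card B * y ^ (t - card B)"
proof -
  have fB: "finite B" using assms finite_subset by blast
  have "(\<Prod>c\<in>{..<t}. if c \<in> B then x else y) = (\<Prod>c\<in>{..<t} \<inter> {c. c \<in> B}. x) * (\<Prod>c\<in>{..<t} \<inter> - {c. c \<in> B}. y)"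
    by (rule prod.If_cases) simp
  also have "{..<t} \<inter> - {c. c \<in> B} = {..<t} - B" by auto
  also have "{..<t} \<inter> {c. c \<in> B} = {..<t} \<inter> B" by auto
  also have "{..<t} \<inter> B = B" using assms by auto
  also have "card ({..<t} - B) = t - card B" using assms fB by (simp add: card_Diff_subset)
  then have "(\<Prod>c\<in>{..<t} - B. y) = y ^ (t - card B)" by simp
  finally show ?thesis by simp
qed

lemma median_fail_count:
  fixes Oc :: "'a set"
  assumes "finite Oc" "Bad \<subseteq> Oc" "real (card Bad) \<le> real (card Oc) / 16"
  shows "real (card {\<omega>\<in>PiE {..<t} (\<lambda>_. Oc). real t \<le> 2 * real (card {c\<in>{..<t}. \<omega> c \<in> Bad})})
      \<le> real (card Oc) ^ t / 2 ^ t"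
proof -
  define \<B> where "\<B> = {B. B \<subseteq> {..<t} \<and> real t \<le> 2 * real (card B)}"
  define F where "F B = PiE {..<t} (\<lambda>c. if c \<in> B then Bad else Oc)" for B
  have "\<B> \<subseteq> Pow {..<t}" by (auto simp: \<B>_def)
  then have fin\<B>: "finite \<B>" by (rule finite_subset) simp
  have card\<B>: "card \<B> \<le> 2 ^ t"
  proof -
    have "card \<B> \<le> card (Pow {..<t::nat})" by (rule card_mono) (auto simp: \<B>_def)
    then show ?thesis by (simp add: card_Pow)
  qed
  have sub: "{\<omega>\<in>PiE {..<t} (\<lambda>_. Oc). real t \<le> 2 * real (card {c\<in>{..<t}. \<omega> c \<in> Bad})} \<subseteq> (\<Union>B\<in>\<B>. F B)"
  proof
    fix \<omega> assume \<omega>: "\<omega> \<in> {\<omega>\<in>PiE {..<t} (\<lambda>_. Oc). real t \<le> 2 * real (card {c\<in>{..<t}. \<omega> c \<in> Bad})}"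
    define B where "B = {c\<in>{..<t}. \<omega> c \<in> Bad}"
    have "B \<in> \<B>" using \<omega> by (auto simp: B_def \<B>_def)
    moreover have "\<omega> \<in> F B" using \<omega> by (auto simp: F_def B_def PiE_def Pi_def)
    ultimately show "\<omega> \<in> (\<Union>B\<in>\<B>. F B)" by blast
  qed
  have fBad: "finite Bad" using finite_subset[OF assms(2) assms(1)] .
  have finF: "finite (F B)" for B unfolding F_def by (rule finite_PiE) (simp_all add: fBad assms(1))
  have cardF: "real (card (F B)) \<le> real (card Oc) ^ t / 4 ^ t" if "B \<in> \<B>" for B
  proof -
    have B: "B \<subseteq> {..<t}" "real t \<le> 2 * real (card B)" using that by (auto simp: \<B>_def)
    have "real (card (F B)) = (\<Prod>c\<in>{..<t}. real (card (if c \<in> B then Bad else Oc)))"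
      by (simp add: F_def card_PiE)
    also have "\<dots> = (\<Prod>c\<in>{..<t}. if c \<in> B then real (card Bad) else real (card Oc))"
      by (intro prod.cong) auto
    also have "\<dots> = real (card Bad) ^ card B * real (card Oc) ^ (t - card B)"
      by (rule prod_if_card[OF B(1)])
    also have "\<dots> \<le> (real (card Oc) / 16) ^ card B * real (card Oc) ^ (t - card B)"
      by (intro mult_right_mono power_mono assms(3)) simp_all
    also have "\<dots> = real (card Oc) ^ (card B + (t - card B)) / 16 ^ card B"
      by (simp add: power_divide power_add field_simps)
    also have "card B + (t - card B) = t"
      using card_mono[OF _ B(1)] by simp
    also have "real (card Oc) ^ t / 16 ^ card B \<le> real (card Oc) ^ t / 4 ^ t"
    proof (rule divide_left_mono)
      have "(4::real) ^ t \<le> 4 ^ (2 * card B)" using B(2) by (intro power_increasing) auto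
      also have "\<dots> = 16 ^ card B" by (simp add: power_mult)
      finally show "(4::real) ^ t \<le> 16 ^ card B" .
    qed simp_all
    finally show ?thesis .
  qed
  have "real (card {\<omega>\<in>PiE {..<t} (\<lambda>_. Oc). real t \<le> 2 * real (card {c\<in>{..<t}. \<omega> c \<in> Bad})})
      \<le> real (card (\<Union>B\<in>\<B>. F B))"
    using sub fin\<B> finF by (intro of_nat_mono card_mono) auto
  also have "\<dots> \<le> real (\<Sum>B\<in>\<B>. card (F B))"
    by (intro of_nat_mono card_UN_le fin\<B>)
  also have "\<dots> = (\<Sum>B\<in>\<B>. real (card (F B)))" by simp
  also have "\<dots> \<le> (\<Sum>B\<in>\<B>. real (card Oc) ^ t / 4 ^ t)"
    by (intro sum_mono cardF)
  also have "\<dots> = real (card \<B>) * (real (card Oc) ^ t / 4 ^ t)" by simp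
  also have "\<dots> \<le> 2 ^ t * (real (card Oc) ^ t / 4 ^ t)"
  proof (rule mult_right_mono)
    have "real (card \<B>) \<le> real (2 ^ t)" using card\<B> by (rule of_nat_mono)
    then show "real (card \<B>) \<le> 2 ^ t" by simp
  qed simp
  also have "\<dots> = real (card Oc) ^ t / 2 ^ t"
  proof -
    have "(4::real) ^ t = 2 ^ t * 2 ^ t" by (induction t) simp_all
    then show ?thesis by simp
  qed
  finally show ?thesis .
qed

lemma median_good:
  fixes v :: "nat \<Rightarrow> real"
  assumes "real t < 2 * real (card {c\<in>{..<t}. \<bar>v c - e\<bar> < \<tau>})"
  shows "e - \<tau> \<le> Inf {y. real t < 2 * real (card {c\<in>{..<t}. v c \<le> y})}"
    and "Inf {y. real t < 2 * real (card {c\<in>{..<t}. v c \<le> y})} \<le> e + \<tau>"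
proof -
  let ?G = "{c\<in>{..<t}. \<bar>v c - e\<bar> < \<tau>}"
  let ?S = "{y. real t < 2 * real (card {c\<in>{..<t}. v c \<le> y})}"
  have inS: "e + \<tau> \<in> ?S"
  proof -
    have "card ?G \<le> card {c\<in>{..<t}. v c \<le> e + \<tau>}" by (intro card_mono) auto
    then show ?thesis using assms by simp
  qed
  have low: "e - \<tau> \<le> y" if "y \<in> ?S" for y
  proof (rule ccontr)
    assume "\<not> e - \<tau> \<le> y"
    then have "{c\<in>{..<t}. v c \<le> y} \<subseteq> {..<t} - ?G" by auto
    then have "card {c\<in>{..<t}. v c \<le> y} \<le> card ({..<t} - ?G)" by (intro card_mono) auto
    also have "\<dots> = t - card ?G" by (subst card_Diff_subset) auto
    finally have X: "card {c\<in>{..<t}. v c \<le> y} \<le> t - card ?G" .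
    have cG: "card ?G \<le> t" using card_mono[OF finite_lessThan, of ?G t] by auto
    have "real (card {c\<in>{..<t}. v c \<le> y}) \<le> real (t - card ?G)" using X by (rule of_nat_mono)
    then have "real (card {c\<in>{..<t}. v c \<le> y}) \<le> real t - real (card ?G)" using cG by (simp add: of_nat_diff)
    then show False using that assms by simp
  qed
  show "e - \<tau> \<le> Inf ?S" using inS low by (intro cInf_greatest) auto
  show "Inf ?S \<le> e + \<tau>" using inS low by (intro cInf_lower) (auto simp: bdd_below_def)
qed

lemma chain_mono:
  assumes "\<forall>j<k. d j \<le> d (Suc j)" "i \<le> j" "j \<le> k"
  shows "(d i :: nat) \<le> d j"
  using assms(2,3)
proof (induction j)
  case 0 then show ?case by simp
next
  case (Suc j)
  show ?case
  proof (cases "i = Suc j")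
    case False
    then have "d i \<le> d j" using Suc by simp
    also have "d j \<le> d (Suc j)" using assms(1) Suc.prems by simp
    finally show ?thesis .
  qed simp
qed

lemma block_cover:
  fixes d :: "nat \<Rightarrow> nat"
  assumes "d 0 = 0" "d k = n" "x \<in> {1..n}"
  defines "j0 \<equiv> LEAST j. x \<le> d j"
  shows "j0 \<in> {1..k}" "x \<in> {d (j0 - 1) + 1 .. d j0}"
proof -
  have ex: "x \<le> d k" using assms by simp
  have j0: "x \<le> d j0" unfolding j0_def by (rule LeastI[of "\<lambda>j. x \<le> d j" k, OF ex])
  have j0k: "j0 \<le> k" unfolding j0_def by (rule Least_le[of "\<lambda>j. x \<le> d j" k, OF ex])
  have j00: "j0 \<noteq> 0"
  proof
    assume "j0 = 0" with j0 assms(1,3) show False by simp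
  qed
  show "j0 \<in> {1..k}" using j0k j00 by auto
  have "\<not> x \<le> d (j0 - 1)" unfolding j0_def
    by (rule not_less_Least) (use j00 in \<open>simp add: j0_def\<close>)
  then show "x \<in> {d (j0 - 1) + 1 .. d j0}" using j0 by auto
qed

lemma hist_range:
  assumes "f \<in> hist_set n k" "x \<in> {1..n}"
  shows "0 \<le> f x \<and> f x \<le> 1"
proof -
  obtain d g where dg: "d 0 = 0" "d k = n" "\<forall>j<k. d j \<le> d (Suc j)"
    "\<forall>j\<in>{1..k}. 0 \<le> g j \<and> g j \<le> 1" "\<forall>j\<in>{1..k}. \<forall>x\<in>{d (j - 1) + 1 .. d j}. f x = g j"
    using assms(1) unfolding hist_set_def by blast
  note bc = block_cover[OF dg(1,2) assms(2)]
  then show ?thesis using dg(4,5) by metis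
qed

definition grid :: "real \<Rightarrow> nat \<Rightarrow> real set" where
  "grid h J = (\<lambda>j. h * real j) ` {..J}"

definition Cand :: "nat \<Rightarrow> nat \<Rightarrow> real \<Rightarrow> nat \<Rightarrow> (nat \<Rightarrow> real) set" where
  "Cand n k h J = {f \<in> hist_set n k. \<forall>x\<in>{1..n}. f x \<in> grid h J}"

definition Phi :: "nat \<Rightarrow> (nat \<Rightarrow> nat) \<times> (nat \<Rightarrow> real) \<Rightarrow> nat \<Rightarrow> real" where
  "Phi n dg x = (if x \<in> {1..n} then snd dg (LEAST j. x \<le> fst dg j) else 0)"

lemma Cand_sub:
  "Cand n k h J \<subseteq> Phi n ` (PiE {..k} (\<lambda>_. {0..n}) \<times> PiE {..k} (\<lambda>_. grid h J))"
proof
  fix f assume fC: "f \<in> Cand n k h J"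
  then obtain d g where dg: "d 0 = 0" "d k = n" "\<forall>j<k. d j \<le> d (Suc j)"
    "\<forall>j\<in>{1..k}. 0 \<le> g j \<and> g j \<le> 1" "\<forall>j\<in>{1..k}. \<forall>x\<in>{d (j - 1) + 1 .. d j}. f x = g j"
    and f0: "\<forall>x. x \<notin> {1..n} \<longrightarrow> f x = 0" and fg: "\<forall>x\<in>{1..n}. f x \<in> grid h J"
    unfolding Cand_def hist_set_def by blast
  have dn: "d j \<le> n" if "j \<le> k" for j using chain_mono[OF dg(3) that] dg(2) by simp
  define d' where "d' = restrict (\<lambda>j. min (d j) n) {..k}"
  define g' where "g' = restrict (\<lambda>j. if j \<in> {1..k} \<and> d (j - 1) < d j then g j else 0) {..k}"
  have "d' \<in> PiE {..k} (\<lambda>_. {0..n})" by (auto simp: d'_def)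
  moreover have "g' \<in> PiE {..k} (\<lambda>_. grid h J)"
  proof -
    have "g j \<in> grid h J" if "j \<in> {1..k}" "d (j - 1) < d j" for j
    proof -
      have "d j \<in> {d (j - 1) + 1 .. d j}" using that by auto
      then have "f (d j) = g j" using dg(5) that(1) by blast
      moreover have "d j \<in> {1..n}" using that dn by auto
      ultimately show ?thesis using fg by metis
    qed
    moreover have "0 \<in> grid h J" unfolding grid_def by (rule image_eqI[of _ _ 0]) auto
    ultimately show ?thesis by (auto simp: g'_def)
  qed
  moreover have "f = Phi n (d', g')"
  proof
    fix x show "f x = Phi n (d', g') x"
    proof (cases "x \<in> {1..n}")
      case False then show ?thesis using f0 False by (auto simp: Phi_def)
    next
      case True
      define j0 where "j0 = (LEAST j. x \<le> d j)"
      note bc = block_cover[OF dg(1,2) True]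
      have j0: "j0 \<in> {1..k}" "x \<in> {d (j0 - 1) + 1 .. d j0}" using bc unfolding j0_def by auto
      have "(LEAST j. x \<le> d' j) = j0"
      proof (rule Least_equality)
        show "x \<le> d' j0" using j0 True by (auto simp: d'_def)
      next
        fix y assume y: "x \<le> d' y"
        show "j0 \<le> y"
        proof (cases "y \<le> k")
          case True
          then have "x \<le> d y" using y by (simp add: d'_def)
          then show ?thesis unfolding j0_def by (rule Least_le)
        next
          case False then show ?thesis using j0 by auto
        qed
      qed
      moreover have "g' j0 = g j0" using j0 by (auto simp: g'_def)
      moreover have "f x = g j0" using dg(5) j0 by blast
      ultimately show ?thesis using True by (simp add: Phi_def)
    qed
  qed
  ultimately show "f \<in> Phi n ` (PiE {..k} (\<lambda>_. {0..n}) \<times> PiE {..k} (\<lambda>_. grid h J))" by blast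
qed

lemma card_grid: "card (grid h J) \<le> J + 1"
  unfolding grid_def using card_image_le[of "{..J}" "\<lambda>j. h * real j"] by simp

lemma finite_grid: "finite (grid h J)"
  unfolding grid_def by simp

lemma Cand_finite_card:
  "finite (Cand n k h J) \<and> card (Cand n k h J) \<le> ((n + 1) * (J + 1)) ^ (k + 1)"
proof -
  let ?D1 = "PiE {..k} (\<lambda>_. {0..n})"
  let ?D2 = "PiE {..k} (\<lambda>_. grid h J)"
  let ?D = "?D1 \<times> ?D2"
  have f1: "finite ?D1" by (rule finite_PiE) simp_all
  have f2: "finite ?D2" by (rule finite_PiE) (simp_all add: finite_grid)
  have fD: "finite ?D" using f1 f2 by (rule finite_cartesian_product)
  have c1: "card ?D1 = (n + 1) ^ (k + 1)" by (simp add: card_PiE)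
  have c2: "card ?D2 = card (grid h J) ^ (k + 1)" by (simp add: card_PiE)
  have "card ?D = card ?D1 * card ?D2" by (rule card_cartesian_product)
  also have "\<dots> = (n + 1) ^ (k + 1) * card (grid h J) ^ (k + 1)" using c1 c2 by simp
  also have "\<dots> \<le> (n + 1) ^ (k + 1) * (J + 1) ^ (k + 1)"
    by (intro mult_le_mono2 power_mono card_grid) simp
  also have "\<dots> = ((n + 1) * (J + 1)) ^ (k + 1)" by (rule power_mult_distrib[symmetric])
  finally have cD: "card ?D \<le> ((n + 1) * (J + 1)) ^ (k + 1)" .
  have fI: "finite (Phi n ` ?D)" using fD by (rule finite_imageI)
  then have f: "finite (Cand n k h J)" using Cand_sub by (rule finite_subset[rotated])
  have "card (Cand n k h J) \<le> card (Phi n ` ?D)" using Cand_sub fI by (rule card_mono[rotated])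
  also have "\<dots> \<le> card ?D" by (rule card_image_le[OF fD])
  finally show ?thesis using f cD by simp
qed

lemma grid_range:
  assumes "0 \<le> h" "real J * h \<le> \<delta>" "y \<in> grid h J"
  shows "0 \<le> y \<and> y \<le> \<delta>"
proof -
  obtain j where j: "j \<le> J" "y = h * real j" using assms(3) unfolding grid_def by auto
  have "h * real j \<le> h * real J" using j assms(1) by (intro mult_left_mono) auto
  then show ?thesis using j assms by (auto simp: mult.commute intro: order.trans)
qed

definition aterm :: "(nat \<Rightarrow> real) \<Rightarrow> (nat \<Rightarrow> real) \<Rightarrow> nat \<Rightarrow> real" where
  "aterm P f a = (if 0 < P a then \<bar>P a - f a\<bar> else 0)"

lemma err_aterm: "err n P f = (\<Sum>a\<in>{1..n}. aterm P f a)"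
  unfolding err_def aterm_def by (rule sum.inter_filter) simp

definition rnd :: "real \<Rightarrow> real \<Rightarrow> real \<Rightarrow> real" where
  "rnd h \<delta> y = h * real (nat \<lfloor>min y \<delta> / h\<rfloor>)"

lemma rnd_props:
  assumes "0 < h" "0 \<le> \<delta>" "0 \<le> y"
  shows "rnd h \<delta> y \<in> grid h (nat \<lfloor>\<delta> / h\<rfloor>)" "0 \<le> rnd h \<delta> y" "rnd h \<delta> y \<le> min y \<delta>"
    "min y \<delta> - h < rnd h \<delta> y"
proof -
  define z where "z = min y \<delta> / h"
  have z0: "0 \<le> z" using assms by (simp add: z_def)
  have fl: "real (nat \<lfloor>z\<rfloor>) = of_int \<lfloor>z\<rfloor>" using z0 by simp
  have "\<lfloor>z\<rfloor> \<le> \<lfloor>\<delta> / h\<rfloor>" unfolding z_def using assms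
    by (intro floor_mono divide_right_mono) auto
  then have "nat \<lfloor>z\<rfloor> \<le> nat \<lfloor>\<delta> / h\<rfloor>" by simp
  then show "rnd h \<delta> y \<in> grid h (nat \<lfloor>\<delta> / h\<rfloor>)" unfolding rnd_def grid_def z_def by auto
  show "0 \<le> rnd h \<delta> y" unfolding rnd_def using assms by simp
  have "h * of_int \<lfloor>z\<rfloor> \<le> h * z" using assms by (intro mult_left_mono) auto
  then show "rnd h \<delta> y \<le> min y \<delta>" unfolding rnd_def using fl assms by (simp add: z_def)
  have "h * (z - 1) < h * of_int \<lfloor>z\<rfloor>" using assms by (intro mult_strict_left_mono) linarith+
  then show "min y \<delta> - h < rnd h \<delta> y" unfolding rnd_def using fl assms
    by (simp add: z_def right_diff_distrib)
qed

lemma rnd_err: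
  assumes "0 < h" "0 \<le> \<delta>" "0 \<le> y" "0 \<le> p" "p \<le> \<delta>"
  shows "\<bar>p - rnd h \<delta> y\<bar> \<le> \<bar>p - y\<bar> + h"
proof -
  note r = rnd_props[OF assms(1-3)]
  have "\<bar>p - min y \<delta>\<bar> \<le> \<bar>p - y\<bar>" using assms by (auto simp: min_def)
  moreover have "\<bar>p - rnd h \<delta> y\<bar> \<le> \<bar>p - min y \<delta>\<bar> + h" using r(3,4) by linarith
  ultimately show ?thesis by linarith
qed

lemma round_hist:
  assumes "0 < h" "0 \<le> \<delta>" "\<forall>x\<in>{1..n}. 0 \<le> P x \<and> P x \<le> \<delta>" "f \<in> hist_set n k"
  shows "\<exists>f'\<in>Cand n k h (nat \<lfloor>\<delta> / h\<rfloor>). err n P f' \<le> err n P f + real n * h"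
proof -
  obtain d g where dg: "d 0 = 0" "d k = n" "\<forall>j<k. d j \<le> d (Suc j)"
    "\<forall>j\<in>{1..k}. 0 \<le> g j \<and> g j \<le> 1" "\<forall>j\<in>{1..k}. \<forall>x\<in>{d (j - 1) + 1 .. d j}. f x = g j"
    and f0: "\<forall>x. x \<notin> {1..n} \<longrightarrow> f x = 0"
    using assms(4) unfolding hist_set_def by blast
  have dn: "d j \<le> n" if "j \<le> k" for j using chain_mono[OF dg(3) that] dg(2) by simp
  define f' where "f' x = (if x \<in> {1..n} then rnd h \<delta> (f x) else 0)" for x
  have fr: "0 \<le> f x \<and> f x \<le> 1" if "x \<in> {1..n}" for x using hist_range[OF assms(4) that] .
  have "f' \<in> hist_set n k"
    unfolding hist_set_def
  proof (intro CollectI conjI exI[of _ d] exI[of _ "\<lambda>j. rnd h \<delta> (g j)"] allI impI ballI)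
    show "d 0 = 0" "d k = n" by (fact dg(1), fact dg(2))
    show "\<And>j. j < k \<Longrightarrow> d j \<le> d (Suc j)" using dg(3) by blast
    fix j assume j: "j \<in> {1..k}"
    note r = rnd_props[OF assms(1,2), of "g j"]
    show "0 \<le> rnd h \<delta> (g j)" using r dg(4) j by blast
    show "rnd h \<delta> (g j) \<le> 1" using r dg(4) j by (meson min.boundedE order.trans)
    fix x assume x: "x \<in> {d (j - 1) + 1 .. d j}"
    then have "x \<in> {1..n}" using dn[of j] j by auto
    then show "f' x = rnd h \<delta> (g j)" using dg(5) j x by (simp add: f'_def)
  next
    fix x :: nat assume "x \<notin> {1..n}" then show "f' x = 0" unfolding f'_def by auto
  qed
  moreover have "\<forall>x\<in>{1..n}. f' x \<in> grid h (nat \<lfloor>\<delta> / h\<rfloor>)"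
    using rnd_props(1)[OF assms(1,2)] fr by (simp add: f'_def)
  ultimately have C: "f' \<in> Cand n k h (nat \<lfloor>\<delta> / h\<rfloor>)" by (simp add: Cand_def)
  let ?S = "{i\<in>{1..n}. 0 < P i}"
  have "err n P f' = (\<Sum>i\<in>?S. \<bar>P i - f' i\<bar>)" by (simp add: err_def)
  also have "\<dots> \<le> (\<Sum>i\<in>?S. \<bar>P i - f i\<bar> + h)"
  proof (intro sum_mono)
    fix i assume i: "i \<in> ?S"
    then show "\<bar>P i - f' i\<bar> \<le> \<bar>P i - f i\<bar> + h"
      using rnd_err[OF assms(1,2)] fr[of i] assms(3) by (simp add: f'_def)
  qed
  also have "\<dots> = err n P f + real (card ?S) * h" by (simp add: err_def sum.distrib)
  also have "\<dots> \<le> err n P f + real n * h"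
  proof -
    have "card ?S \<le> card {1..n}" by (intro card_mono) auto
    then show ?thesis using assms(1) by (simp add: mult_right_mono)
  qed
  finally show ?thesis using C by blast
qed

lemma hist_zero: "1 \<le> k \<Longrightarrow> (\<lambda>_. 0) \<in> hist_set n k"
  unfolding hist_set_def
  by (intro CollectI conjI exI[of _ "\<lambda>j. if j = 0 then 0 else n"] exI[of _ "\<lambda>_. 0"]) auto

definition est :: "nat \<Rightarrow> nat \<Rightarrow> (nat \<Rightarrow> real) \<Rightarrow> (nat \<Rightarrow> real) \<Rightarrow> nat list \<Rightarrow> real" where
  "est n m P f xs = real n / real m * sum_list (map (aterm P f) xs)"

definition tau :: "real \<Rightarrow> real \<Rightarrow> real" where
  "tau \<epsilon> e = \<epsilon> / 8 + max 0 (e - 2) / 2"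

definition medv :: "nat \<Rightarrow> (nat \<Rightarrow> real) \<Rightarrow> real" where
  "medv t v = Inf {y. real t < 2 * real (card {c\<in>{..<t}. v c \<le> y})}"

definition BadC :: "nat \<Rightarrow> nat \<Rightarrow> real \<Rightarrow> (nat \<Rightarrow> real) \<Rightarrow> (nat \<Rightarrow> real) \<Rightarrow> nat list set" where
  "BadC n m \<epsilon> P f = {xs\<in>LS {1..n} m. tau \<epsilon> (err n P f) \<le> \<bar>est n m P f xs - err n P f\<bar>}"

definition FailS :: "nat \<Rightarrow> nat \<Rightarrow> nat \<Rightarrow> real \<Rightarrow> (nat \<Rightarrow> real) \<Rightarrow> (nat \<Rightarrow> real) \<Rightarrow> (nat \<Rightarrow> nat list) set" where
  "FailS n m t \<epsilon> P f = {\<omega>\<in>PiE {..<t} (\<lambda>_. LS {1..n} m).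
      real t \<le> 2 * real (card {c\<in>{..<t}. \<omega> c \<in> BadC n m \<epsilon> P f})}"

lemma tau_pos: "0 < \<epsilon> \<Longrightarrow> 0 < tau \<epsilon> e"
  unfolding tau_def by (simp add: add_pos_nonneg)

lemma BadC_card:
  assumes "1 \<le> n" "1 \<le> m" "0 < \<epsilon>" "\<epsilon> < 1"
    "\<forall>x\<in>{1..n}. 0 \<le> P x \<and> P x \<le> \<delta>" "\<forall>x\<in>{1..n}. 0 \<le> f x \<and> f x \<le> \<delta>"
    "real n * \<delta> * 4096 \<le> \<epsilon>^2 * real m"
  shows "real (card (BadC n m \<epsilon> P f)) \<le> real (card (LS {1..n} m)) / 16"
proof -
  let ?E = "err n P f"
  let ?\<tau> = "tau \<epsilon> ?E"
  have a: "0 \<le> aterm P f u \<and> aterm P f u \<le> \<delta>" if "u \<in> {1..n}" for u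
  proof -
    have "0 \<le> P u" "P u \<le> \<delta>" "0 \<le> f u" "f u \<le> \<delta>" using assms(5,6) that by auto
    then show ?thesis by (auto simp: aterm_def abs_le_iff)
  qed
  have E: "?E = (\<Sum>u\<in>{1..n}. aterm P f u)" by (rule err_aterm)
  have E0: "0 \<le> ?E" unfolding E using a by (intro sum_nonneg) auto
  have tp: "0 < ?\<tau>" using tau_pos assms(3) by blast
  have X: "real (card {xs\<in>LS {1..n} m. ?\<tau> \<le> \<bar>real n / real m * sum_list (map (aterm P f) xs) - (\<Sum>u\<in>{1..n}. aterm P f u)\<bar>}) * ?\<tau>^2
     \<le> real n ^ m * (real n * \<delta> * (\<Sum>u\<in>{1..n}. aterm P f u) / real m)"
    by (rule est_count[of n m ?\<tau> "aterm P f" \<delta>, OF assms(1,2) tp a])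
  have "real (card (BadC n m \<epsilon> P f)) * ?\<tau>^2 \<le> real n ^ m * (real n * \<delta> * ?E / real m)"
    using X unfolding BadC_def est_def E[symmetric] .
  also have "\<dots> \<le> real n ^ m * (?\<tau>^2 / 16)"
  proof (intro mult_left_mono)
    have key: "?E * \<epsilon>^2 \<le> 256 * ?\<tau>^2"
    proof (cases "?E \<le> 4")
      case True
      have "\<epsilon> / 8 \<le> ?\<tau>" unfolding tau_def by simp
      then have "(\<epsilon>/8)^2 \<le> ?\<tau>^2" using assms(3) by (intro power_mono) auto
      moreover have "?E * \<epsilon>^2 \<le> 4 * \<epsilon>^2" using True by (intro mult_right_mono) auto
      ultimately show ?thesis by (simp add: power_divide)
    next
      case False
      have "?\<tau> = \<epsilon> / 8 + ?E / 2 - 1" unfolding tau_def using False by (simp add: max_def diff_divide_distrib)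
      then have "?E / 4 \<le> ?\<tau>" using False assms(3) by linarith
      then have T: "(?E/4)^2 \<le> ?\<tau>^2" using E0 by (intro power_mono) auto
      have "\<epsilon>^2 \<le> 1" using assms(3,4) by (simp add: power_le_one)
      then have "?E * \<epsilon>^2 \<le> ?E * 1" using E0 by (intro mult_left_mono) auto
      also have "\<dots> \<le> ?E * (16 * ?E)" using E0 False by (intro mult_left_mono) auto
      finally have "?E * \<epsilon>^2 \<le> 256 * (?E/4)^2" by (simp add: power2_eq_square)
      then show ?thesis using T by linarith
    qed
    have "real n * \<delta> * ?E / real m = (real n * \<delta> * 4096) * ?E / (4096 * real m)" by simp
    also have "\<dots> \<le> (\<epsilon>^2 * real m) * ?E / (4096 * real m)"
      using assms(7) E0 by (intro divide_right_mono mult_right_mono) auto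
    also have "\<dots> = ?E * \<epsilon>^2 / 4096" using assms(2) by simp
    also have "\<dots> \<le> ?\<tau>^2 / 16" using key by simp
    finally show "real n * \<delta> * ?E / real m \<le> ?\<tau>^2 / 16" .
  qed simp
  finally have "real (card (BadC n m \<epsilon> P f)) * ?\<tau>^2 \<le> (real n ^ m / 16) * ?\<tau>^2" by simp
  then have "real (card (BadC n m \<epsilon> P f)) \<le> real n ^ m / 16"
    using tp by (simp add: mult_le_cancel_right)
  then show ?thesis by (simp add: card_LS)
qed

lemma FailS_card:
  assumes "1 \<le> n" "1 \<le> m" "0 < \<epsilon>" "\<epsilon> < 1"
    "\<forall>x\<in>{1..n}. 0 \<le> P x \<and> P x \<le> \<delta>" "\<forall>x\<in>{1..n}. 0 \<le> f x \<and> f x \<le> \<delta>"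
    "real n * \<delta> * 4096 \<le> \<epsilon>^2 * real m"
  shows "real (card (FailS n m t \<epsilon> P f)) \<le> real (card (PiE {..<t} (\<lambda>_. LS {1..n} m))) / 2 ^ t"
proof -
  have "real (card (FailS n m t \<epsilon> P f)) \<le> real (card (LS {1..n} m)) ^ t / 2 ^ t"
    unfolding FailS_def
    by (rule median_fail_count[OF finite_LS _ BadC_card[OF assms]]) (auto simp: BadC_def)
  also have "real (card (LS {1..n} m)) ^ t = real (card (PiE {..<t} (\<lambda>_. LS {1..n} m)))"
    by (simp add: card_PiE)
  finally show ?thesis .
qed

lemma Fail_union_card:
  assumes "1 \<le> n" "1 \<le> m" "0 < \<epsilon>" "\<epsilon> < 1"
    "\<forall>x\<in>{1..n}. 0 \<le> P x \<and> P x \<le> \<delta>" "\<forall>f\<in>C. \<forall>x\<in>{1..n}. 0 \<le> f x \<and> f x \<le> \<delta>"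
    "real n * \<delta> * 4096 \<le> \<epsilon>^2 * real m" "finite C" "3 * real (card C) \<le> 2 ^ t"
  shows "real (card (\<Union>f\<in>C. FailS n m t \<epsilon> P f)) \<le> real (card (PiE {..<t} (\<lambda>_. LS {1..n} m))) / 3"
proof -
  let ?N = "real (card (PiE {..<t} (\<lambda>_. LS {1..n} m)))"
  have "real (card (\<Union>f\<in>C. FailS n m t \<epsilon> P f)) \<le> real (\<Sum>f\<in>C. card (FailS n m t \<epsilon> P f))"
    by (intro of_nat_mono card_UN_le assms(8))
  also have "\<dots> = (\<Sum>f\<in>C. real (card (FailS n m t \<epsilon> P f)))" by simp
  also have "\<dots> \<le> (\<Sum>f\<in>C. ?N / 2 ^ t)"
    by (intro sum_mono FailS_card[OF assms(1-5) _ assms(7)]) (use assms(6) in blast)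
  also have "\<dots> = real (card C) * (?N / 2 ^ t)" by simp
  also have "\<dots> \<le> (2 ^ t / 3) * (?N / 2 ^ t)"
    using assms(9) by (intro mult_right_mono) auto
  also have "\<dots> = ?N / 3" by simp
  finally show ?thesis .
qed

lemma good_omega:
  assumes "\<omega> \<in> PiE {..<t} (\<lambda>_. LS {1..n} m)" "\<omega> \<notin> FailS n m t \<epsilon> P f"
  shows "err n P f - tau \<epsilon> (err n P f) \<le> medv t (\<lambda>c. est n m P f (\<omega> c))"
    "medv t (\<lambda>c. est n m P f (\<omega> c)) \<le> err n P f + tau \<epsilon> (err n P f)"
proof -
  let ?B = "{c\<in>{..<t}. \<omega> c \<in> BadC n m \<epsilon> P f}"
  let ?G = "{c\<in>{..<t}. \<bar>est n m P f (\<omega> c) - err n P f\<bar> < tau \<epsilon> (err n P f)}"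
  have lt: "real t > 2 * real (card ?B)" using assms by (auto simp: FailS_def)
  have "?G = {..<t} - ?B" using assms(1) by (auto simp: BadC_def PiE_def Pi_def)
  moreover have "card ({..<t} - ?B) = t - card ?B" by (subst card_Diff_subset) auto
  ultimately have "card ?G = t - card ?B" by simp
  moreover have "card ?B \<le> t" using card_mono[OF finite_lessThan, of ?B t] by auto
  ultimately have "real (card ?G) = real t - real (card ?B)" by (simp add: of_nat_diff)
  then have "real t < 2 * real (card ?G)" using lt by simp
  note mg = median_good[of t "\<lambda>c. est n m P f (\<omega> c)" "err n P f" "tau \<epsilon> (err n P f)", OF this]
  show "err n P f - tau \<epsilon> (err n P f) \<le> medv t (\<lambda>c. est n m P f (\<omega> c))"
    using mg(1) by (simp add: medv_def)
  show "medv t (\<lambda>c. est n m P f (\<omega> c)) \<le> err n P f + tau \<epsilon> (err n P f)"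
    using mg(2) by (simp add: medv_def)
qed

lemma select_good:
  assumes "0 < \<epsilon>" "\<epsilon> < 1" "fs \<in> C" "err n P fs \<le> opt + \<epsilon> / 4" "opt \<le> 1"
    "fh \<in> C" "\<forall>g\<in>C. M fh \<le> M g"
    "\<forall>f\<in>C. err n P f - tau \<epsilon> (err n P f) \<le> M f \<and> M f \<le> err n P f + tau \<epsilon> (err n P f)"
  shows "err n P fh \<le> opt + \<epsilon>"
proof -
  have s1: "M fs \<le> err n P fs + \<epsilon> / 8"
    using assms(8) assms(3) assms(4,5,2) by (auto simp: tau_def max_def)
  have s2: "M fh \<le> M fs" using assms(7,3) by blast
  have s3: "err n P fh - tau \<epsilon> (err n P fh) \<le> M fh" using assms(8,6) by blast
  show ?thesis
  proof (cases "err n P fh \<le> 2")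
    case True
    then have "tau \<epsilon> (err n P fh) = \<epsilon> / 8" by (simp add: tau_def)
    then show ?thesis using s1 s2 s3 assms(1,4) by linarith
  next
    case False
    then have "tau \<epsilon> (err n P fh) = \<epsilon> / 8 + err n P fh / 2 - 1" by (simp add: tau_def diff_divide_distrib)
    then have "err n P fh / 2 + 1 - \<epsilon> / 8 \<le> M fh" using s3 by linarith
    then have "err n P fh / 2 + 1 - \<epsilon> / 8 \<le> opt + \<epsilon> / 4 + \<epsilon> / 8" using s1 s2 assms(4) by linarith
    then have "err n P fh \<le> 2 * opt - 2 + \<epsilon>" by linarith
    then show ?thesis using False assms(2,5) by linarith
  qed
qed

lemma insc_Cons: "insc (u # s) a = of_bool (u = (a, True)) + insc s a"
  by (simp add: insc_def)
lemma delc_Cons: "delc (u # s) a = of_bool (u = (a, False)) + delc s a"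
  by (simp add: delc_def)

lemma sum_insc: "\<forall>u\<in>set s. fst u \<in> A \<Longrightarrow> finite A \<Longrightarrow> (\<Sum>a\<in>A. insc s a) = TI s"
proof (induction s)
  case Nil then show ?case by (simp add: insc_def TI_def)
next
  case (Cons u s)
  have "(\<Sum>a\<in>A. of_bool (u = (a, True)) :: nat) = of_bool (snd u)"
  proof (cases u)
    case (Pair i b)
    then have i: "i \<in> A" using Cons.prems by auto
    have "(\<Sum>a\<in>A. of_bool (u = (a, True)) :: nat) = (\<Sum>a\<in>A. if a = i then of_bool b else 0)"
      using Pair by (intro sum.cong) auto
    also have "\<dots> = of_bool b" using i Cons.prems(2) by simp
    finally show ?thesis using Pair by simp
  qed
  then show ?case using Cons by (simp add: insc_Cons sum.distrib TI_def)
qed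

lemma sum_delc: "\<forall>u\<in>set s. fst u \<in> A \<Longrightarrow> finite A \<Longrightarrow> (\<Sum>a\<in>A. delc s a) = TD s"
proof (induction s)
  case Nil then show ?case by (simp add: delc_def TD_def)
next
  case (Cons u s)
  have "(\<Sum>a\<in>A. of_bool (u = (a, False)) :: nat) = of_bool (\<not> snd u)"
  proof (cases u)
    case (Pair i b)
    then have i: "i \<in> A" using Cons.prems by auto
    have "(\<Sum>a\<in>A. of_bool (u = (a, False)) :: nat) = (\<Sum>a\<in>A. if a = i then of_bool (\<not> b) else 0)"
      using Pair by (intro sum.cong) auto
    also have "\<dots> = of_bool (\<not> b)" using i Cons.prems(2) by simp
    finally show ?thesis using Pair by simp
  qed
  then show ?case using Cons by (simp add: delc_Cons sum.distrib TD_def)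
qed

lemma cnt_eq: "cnt s a = int (insc s a) - int (delc s a)"
  by (simp add: cnt_def insc_def delc_def)

lemma mtot_eq: "\<forall>u\<in>set s. fst u \<in> {1..n} \<Longrightarrow> mtot n s = int (TI s) - int (TD s)"
proof -
  assume a: "\<forall>u\<in>set s. fst u \<in> {1..n}"
  have "(\<Sum>i=1..n. int (insc s i)) = int (TI s)"
    by (simp only: of_nat_sum[symmetric] sum_insc[OF a finite_atLeastAtMost])
  moreover have "(\<Sum>i=1..n. int (delc s i)) = int (TD s)"
    by (simp only: of_nat_sum[symmetric] sum_delc[OF a finite_atLeastAtMost])
  ultimately show ?thesis unfolding mtot_def cnt_eq by (simp add: sum_subtractf)
qed

lemma concat_map_concat: "concat (map g (concat xss)) = concat (map (\<lambda>zs. concat (map g zs)) xss)"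
  by (induction xss) auto

fun ptrip :: "nat list \<Rightarrow> (nat \<times> nat \<times> nat) list" where
  "ptrip (a#x#y#r) = (a,x,y) # ptrip r"
| "ptrip _ = []"

lemma ptrip_concat: "ptrip (concat (map (\<lambda>a. [a, f a, g a]) zs)) = map (\<lambda>a. (a, f a, g a)) zs"
  by (induction zs) auto

function chunks :: "nat \<Rightarrow> 'a list \<Rightarrow> 'a list list" where
  "chunks m xs = (if m = 0 \<or> xs = [] then [] else take m xs # chunks m (drop m xs))"
  by auto
termination by (relation "Wellfounded.measure (\<lambda>(m, xs). length xs)") auto

declare chunks.simps[simp del]

lemma chunks_concat: "0 < m \<Longrightarrow> \<forall>z\<in>set zss. length z = m \<Longrightarrow> chunks m (concat zss) = zss"
proof (induction zss)
  case Nil then show ?case by (simp add: chunks.simps)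
next
  case (Cons z zss)
  have "z \<noteq> []" using Cons.prems by auto
  then show ?case using Cons by (subst chunks.simps) auto
qed

definition qv :: "nat list \<Rightarrow> nat \<times> nat \<times> nat \<Rightarrow> real" where
  "qv xs q = (real (fst (snd q)) - real (snd (snd q))) / (real (xs ! 0) - real (xs ! 1))"

definition estq :: "nat \<Rightarrow> nat \<Rightarrow> nat list \<Rightarrow> (nat \<Rightarrow> real) \<Rightarrow> (nat \<times> nat \<times> nat) list \<Rightarrow> real" where
  "estq n m xs f cp = real n / real m *
     sum_list (map (\<lambda>q. if 0 < qv xs q then \<bar>qv xs q - f (fst q)\<bar> else 0) cp)"

definition medq :: "nat \<Rightarrow> nat \<Rightarrow> nat \<Rightarrow> nat list \<Rightarrow> (nat \<Rightarrow> real) \<Rightarrow> real" where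
  "medq n m t xs f = medv t (\<lambda>c. estq n m xs f (chunks m (ptrip (drop 2 xs)) ! c))"

definition OUTF :: "nat \<Rightarrow> nat \<Rightarrow> nat \<Rightarrow> (nat \<Rightarrow> real) set \<Rightarrow> nat list \<Rightarrow> (nat \<Rightarrow> real)" where
  "OUTF n m t C xs = (SOME f. f \<in> C \<and> (\<forall>g\<in>C. medq n m t xs f \<le> medq n m t xs g))"

lemma medq_lay:
  assumes "\<forall>u\<in>set s. fst u \<in> {1..n}" "0 < m" "\<forall>c<t. length (\<omega> c) = m"
  shows "medq n m t (lay t \<omega> s) f = medv t (\<lambda>c. est n m (pvec n s) f (\<omega> c))"
proof -
  let ?xs = "lay t \<omega> s"
  have "drop 2 ?xs = concat (map (\<lambda>a. [a, insc s a, delc s a]) (concat (map \<omega> [0..<t])))"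
    by (simp add: lay_def)
  then have "ptrip (drop 2 ?xs) = map (\<lambda>a. (a, insc s a, delc s a)) (concat (map \<omega> [0..<t]))"
    by (simp only: ptrip_concat)
  also have "\<dots> = concat (map (\<lambda>zs. map (\<lambda>a. (a, insc s a, delc s a)) zs) (map \<omega> [0..<t]))"
    by (rule map_concat)
  finally have "ptrip (drop 2 ?xs) = concat (map (\<lambda>zs. map (\<lambda>a. (a, insc s a, delc s a)) zs) (map \<omega> [0..<t]))" .
  then have ch: "chunks m (ptrip (drop 2 ?xs)) = map (\<lambda>zs. map (\<lambda>a. (a, insc s a, delc s a)) zs) (map \<omega> [0..<t])"
    using assms(2,3) by (simp add: chunks_concat)
  have q: "qv ?xs (a, insc s a, delc s a) = pvec n s a" for a
    using assms(1) by (simp add: qv_def lay_def pvec_def mtot_eq cnt_eq)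
  have e: "estq n m ?xs f (chunks m (ptrip (drop 2 ?xs)) ! c) = est n m (pvec n s) f (\<omega> c)" if "c < t" for c
  proof -
    have e1: "(\<lambda>q. if 0 < qv ?xs q then \<bar>qv ?xs q - f (fst q)\<bar> else 0) \<circ> (\<lambda>a. (a, insc s a, delc s a))
       = aterm (pvec n s) f"
      by (rule ext) (simp only: o_def q fst_conv aterm_def)
    show ?thesis using that unfolding ch estq_def est_def by (simp add: e1)
  qed
  show ?thesis unfolding medq_def medv_def
    by (intro arg_cong[where f = Inf] Collect_cong arg_cong[where f = "\<lambda>x. real t < 2 * real x"]
        arg_cong[where f = card]) (auto simp: e)
qed

lemma OUTF_spec:
  assumes "finite C" "C \<noteq> {}"
  shows "OUTF n m t C xs \<in> C \<and> (\<forall>g\<in>C. medq n m t xs (OUTF n m t C xs) \<le> medq n m t xs g)"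
proof -
  obtain f where "f \<in> C" "\<forall>g\<in>C. medq n m t xs f \<le> medq n m t xs g"
    using ex_min_if_finite[of "medq n m t xs ` C"] assms
    by (metis (no_types, lifting) arg_min_if_finite(1) arg_min_if_finite(2) not_less)
  then show ?thesis unfolding OUTF_def by (rule someI[where x = f, OF conjI])
qed

lemma valid_nonneg: "valid_stream n s \<Longrightarrow> 0 \<le> cnt s i"
  unfolding valid_stream_def by (metis order_refl take_all)

lemma pvec_props:
  assumes "valid_stream n s" "0 < mtot n s"
  shows "\<And>i. 0 \<le> pvec n s i" "(\<Sum>i=1..n. pvec n s i) = 1"
proof -
  show "\<And>i. 0 \<le> pvec n s i" using valid_nonneg[OF assms(1)] assms(2) by (simp add: pvec_def)
  have "(\<Sum>i=1..n. pvec n s i) = (\<Sum>i=1..n. real_of_int (cnt s i)) / real_of_int (mtot n s)"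
    by (simp add: pvec_def sum_divide_distrib)
  also have "(\<Sum>i=1..n. real_of_int (cnt s i)) = real_of_int (mtot n s)" by (simp add: mtot_def)
  also have "real_of_int (mtot n s) / real_of_int (mtot n s) = 1" using assms(2) by simp
  finally show "(\<Sum>i=1..n. pvec n s i) = 1" .
qed

lemma err_nonneg: "0 \<le> err n P f"
  unfolding err_def by (intro sum_nonneg) auto

lemma opt_le_one:
  assumes "1 \<le> k" "\<And>i. 0 \<le> P i" "(\<Sum>i=1..n. P i) = 1"
  shows "opt_err n k P \<le> 1"
proof -
  have "opt_err n k P \<le> err n P (\<lambda>_. 0)" unfolding opt_err_def
    by (intro cInf_lower imageI hist_zero assms(1)) (auto simp: bdd_below_def intro!: exI[of _ 0] err_nonneg)
  also have "err n P (\<lambda>_. 0) = (\<Sum>i\<in>{i\<in>{1..n}. 0 < P i}. P i)" by (simp add: err_def)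
  also have "\<dots> = (\<Sum>i=1..n. P i)"
  proof (rule sum.mono_neutral_left)
    show "\<forall>i\<in>{1..n} - {i\<in>{1..n}. 0 < P i}. P i = 0" using assms(2) by (auto simp: less_le)
  qed auto
  finally show ?thesis using assms(3) by simp
qed

lemma exists_near_opt:
  assumes "1 \<le> k" "0 < \<eta>"
  shows "\<exists>f\<in>hist_set n k. err n P f < opt_err n k P + \<eta>"
proof -
  have "Inf (err n P ` hist_set n k) < opt_err n k P + \<eta>" using assms by (simp add: opt_err_def)
  then obtain y where "y \<in> err n P ` hist_set n k" "y < opt_err n k P + \<eta>"
    using cInf_lessD[of "err n P ` hist_set n k"] hist_zero[OF assms(1)] by blast
  then show ?thesis by blast
qed

lemma LS_nonempty: "1 \<le> n \<Longrightarrow> replicate m 1 \<in> LS {1..n} m"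
  by (auto simp: LS_def)

lemma alg_correct:
  fixes n k m t w r L :: nat and \<epsilon> h \<delta> :: real
  assumes "1 \<le> n" "1 \<le> m" "1 \<le> k" "0 < \<epsilon>" "\<epsilon> < 1" "0 < h" "0 \<le> \<delta>"
    "real n * h \<le> \<epsilon> / 8" "J = nat \<lfloor>\<delta> / h\<rfloor>"
    "real n * \<delta> * 4096 \<le> \<epsilon>^2 * real m" "3 * real (card (Cand n k h J)) \<le> 2 ^ t"
    "n < 2 ^ w" "L < 2 ^ w" "r = 2 + 3 * (t * m)"
  and s: "valid_stream n s" "length s \<le> L" "0 < mtot n s" "\<forall>i\<in>{1..n}. pvec n s i \<le> \<delta>"
  shows "2 / 3 \<le> measure_pmf.prob
     (alg_output (mkalg w r t (pmf_of_set (PiE {..<t} (\<lambda>_. LS {1..n} m))) (OUTF n m t (Cand n k h J))) s)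
     {f. f \<in> hist_set n k \<and> err n (pvec n s) f \<le> opt_err n k (pvec n s) + \<epsilon>}"
proof -
  define \<Omega> where "\<Omega> = PiE {..<t} (\<lambda>_. LS {1..n} m)"
  define C where "C = Cand n k h J"
  define P where "P = pvec n s"
  define opt where "opt = opt_err n k P"
  define Fail where "Fail = (\<Union>f\<in>C. FailS n m t \<epsilon> P f)"
  have fO: "finite \<Omega>" unfolding \<Omega>_def by (intro finite_PiE finite_LS) auto
  have neO: "\<Omega> \<noteq> {}" unfolding \<Omega>_def using LS_nonempty[OF assms(1), of m] by (auto simp: PiE_eq_empty_iff)
  have fC: "finite C" and cC: "card C \<le> ((n + 1) * (J + 1)) ^ (k + 1)"
    using Cand_finite_card unfolding C_def by auto
  have Pr: "0 \<le> P x \<and> P x \<le> \<delta>" if "x \<in> {1..n}" for x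
    using pvec_props(1)[OF s(1,3)] s(4) that by (auto simp: P_def)
  have Ps: "(\<Sum>i=1..n. P i) = 1" using pvec_props(2)[OF s(1,3)] by (simp add: P_def)
  have Cr: "\<forall>f\<in>C. \<forall>x\<in>{1..n}. 0 \<le> f x \<and> f x \<le> \<delta>"
  proof (intro ballI)
    fix f x assume "f \<in> C" "x \<in> {1..n}"
    then have "f x \<in> grid h J" by (auto simp: C_def Cand_def)
    moreover have "real J * h \<le> \<delta>"
    proof -
      have "real J \<le> \<delta> / h" using assms(6,7,9) by simp
      then show ?thesis using assms(6) by (simp add: field_simps)
    qed
    ultimately show "0 \<le> f x \<and> f x \<le> \<delta>" using grid_range[of h J \<delta> "f x"] assms(6) by simp
  qed
  obtain f0 where f0: "f0 \<in> hist_set n k" "err n P f0 < opt + \<epsilon> / 8"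
    using exists_near_opt[OF assms(3), of "\<epsilon>/8" n P] assms(4) by (auto simp: opt_def)
  obtain fs where fs: "fs \<in> C" "err n P fs \<le> err n P f0 + real n * h"
    using round_hist[OF assms(6,7) _ f0(1)] Pr unfolding C_def assms(9) by blast
  have fs2: "err n P fs \<le> opt + \<epsilon> / 4" using fs f0 assms(8) by linarith
  have opt1: "opt \<le> 1" unfolding opt_def using opt_le_one[OF assms(3)] pvec_props[OF s(1,3)] Ps
    by (simp add: P_def)
  have neC: "C \<noteq> {}" using fs by auto
  have cF: "real (card Fail) \<le> real (card \<Omega>) / 3"
    unfolding Fail_def \<Omega>_def
    by (rule Fail_union_card[OF assms(1,2,4,5) _ Cr assms(10) fC]) (use Pr assms(11) C_def in auto)
  have om: "length (concat (map \<omega> [0..<t])) = t * m \<and> (\<forall>a\<in>set (concat (map \<omega> [0..<t])). a < 2^w)"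
    and om2: "\<forall>c<t. length (\<omega> c) = m"
    if "\<omega> \<in> \<Omega>" for \<omega>
  proof -
    have lc: "\<forall>c<t. length (\<omega> c) = m \<and> set (\<omega> c) \<subseteq> {1..n}" using that by (auto simp: \<Omega>_def LS_def PiE_def Pi_def)
    then show "\<forall>c<t. length (\<omega> c) = m" by auto
    have "length (concat (map \<omega> [0..<t])) = (\<Sum>c\<leftarrow>[0..<t]. length (\<omega> c))" by (simp add: length_concat o_def)
    also have "\<dots> = (\<Sum>c\<leftarrow>[0..<t]. m)" using lc by (intro arg_cong[where f = sum_list] map_cong) auto
    also have "\<dots> = t * m" by (simp add: sum_list_triv)
    finally show "length (concat (map \<omega> [0..<t])) = t * m \<and> (\<forall>a\<in>set (concat (map \<omega> [0..<t])). a < 2^w)"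
      using lc assms(12) by fastforce
  qed
  have ls: "length s < 2 ^ w" using s(2) assms(13) by simp
  have items: "\<forall>u\<in>set s. fst u \<in> {1..n}" using s(1) by (simp add: valid_stream_def)
  have out: "alg_output (mkalg w r t (pmf_of_set \<Omega>) (OUTF n m t C)) s
      = map_pmf (\<lambda>\<omega>. OUTF n m t C (lay t \<omega> s)) (pmf_of_set \<Omega>)"
    by (rule output_mkalg[OF _ assms(14) ls]) (use om fO neO in auto)
  have good: "OUTF n m t C (lay t \<omega> s) \<in> {f. f \<in> hist_set n k \<and> err n P f \<le> opt + \<epsilon>}"
    if "\<omega> \<in> \<Omega> - Fail" for \<omega>
  proof -
    let ?M = "medq n m t (lay t \<omega> s)"
    let ?fh = "OUTF n m t C (lay t \<omega> s)"
    have spec: "?fh \<in> C" "\<forall>g\<in>C. ?M ?fh \<le> ?M g" using OUTF_spec[OF fC neC] by auto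
    have M: "?M f = medv t (\<lambda>c. est n m P f (\<omega> c))" for f
      using medq_lay[OF items _ om2] that assms(2) by (simp add: P_def)
    have bnd: "\<forall>f\<in>C. err n P f - tau \<epsilon> (err n P f) \<le> ?M f \<and> ?M f \<le> err n P f + tau \<epsilon> (err n P f)"
    proof
      fix f assume "f \<in> C"
      then have "\<omega> \<notin> FailS n m t \<epsilon> P f" using that by (auto simp: Fail_def)
      moreover have "\<omega> \<in> PiE {..<t} (\<lambda>_. LS {1..n} m)" using that by (simp add: \<Omega>_def)
      ultimately show "err n P f - tau \<epsilon> (err n P f) \<le> ?M f \<and> ?M f \<le> err n P f + tau \<epsilon> (err n P f)"
        using good_omega unfolding M by blast
    qed
    have "err n P ?fh \<le> opt + \<epsilon>"
      by (rule select_good[OF assms(4,5) fs(1) fs2 opt1 spec bnd])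
    moreover have "?fh \<in> hist_set n k" using spec(1) by (simp add: C_def Cand_def)
    ultimately show ?thesis by simp
  qed
  have "measure_pmf.prob (pmf_of_set \<Omega>) (\<Omega> - Fail)
      \<le> measure_pmf.prob (pmf_of_set \<Omega>) ((\<lambda>\<omega>. OUTF n m t C (lay t \<omega> s)) -` {f. f \<in> hist_set n k \<and> err n P f \<le> opt + \<epsilon>})"
    using good by (intro measure_pmf.finite_measure_mono) auto
  moreover have "measure_pmf.prob (pmf_of_set \<Omega>) (\<Omega> - Fail) \<ge> 2 / 3"
  proof -
    have "measure_pmf.prob (pmf_of_set \<Omega>) (\<Omega> - Fail) = real (card (\<Omega> - Fail)) / real (card \<Omega>)"
      using fO neO by (simp add: measure_pmf_of_set Int_absorb1)
    moreover have "real (card (\<Omega> - Fail)) \<ge> real (card \<Omega>) - real (card Fail)"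
    proof -
      have FsubO: "Fail \<subseteq> \<Omega>" by (auto simp: Fail_def FailS_def \<Omega>_def)
      have "card \<Omega> \<le> card ((\<Omega> - Fail) \<union> Fail)"
        by (rule card_mono) (use fO FsubO finite_subset in auto)
      also have "\<dots> \<le> card (\<Omega> - Fail) + card Fail" by (rule card_Un_le)
      finally have "card \<Omega> \<le> card (\<Omega> - Fail) + card Fail" .
      then show ?thesis by linarith
    qed
    moreover have "0 < real (card \<Omega>)" using fO neO by (simp add: card_gt_0_iff)
    ultimately have "real (card \<Omega>) * measure_pmf.prob (pmf_of_set \<Omega>) (\<Omega> - Fail) \<ge> real (card \<Omega>) * (2/3)"
      using cF by (simp add: field_simps)
    then show ?thesis using \<open>0 < real (card \<Omega>)\<close> by (simp add: mult_le_cancel_left_pos)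
  qed
  ultimately show ?thesis
    unfolding out[unfolded \<Omega>_def C_def] by (simp add: \<Omega>_def C_def P_def opt_def)
qed

definition triv :: salg where
  "triv = \<lparr> s_init = return_pmf [], s_upd = (\<lambda>_ _. return_pmf []), s_out = (\<lambda>_. return_pmf (\<lambda>_. 0)) \<rparr>"

lemma run_triv: "run triv s = return_pmf []"
proof (induction s rule: rev_induct)
  case Nil then show ?case by (simp add: run_def triv_def)
next
  case (snoc u s) then show ?case by (simp add: run_snoc triv_def)
qed

lemma space_triv: "0 \<le> S \<Longrightarrow> space_bounded triv n L S"
  by (simp add: space_bounded_def run_triv)

lemma ln2_ge: "1/2 \<le> ln (2::real)"
  using ln_le_minus_one[of "1/2::real"] by (simp add: ln_div)

lemma b_bounds:
  fixes n :: nat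
  assumes "2 \<le> n"
  defines "b \<equiv> nat \<lceil>log 2 (real n + 2)\<rceil>"
  shows "real n + 2 \<le> 2 ^ b" "1 \<le> b" "real b \<le> 6 * ln (real n)"
proof -
  have l0: "0 \<le> log 2 (real n + 2)" by simp
  have rb: "real b = of_int \<lceil>log 2 (real n + 2)\<rceil>" using l0 by (simp add: b_def)
  have "log 2 (real n + 2) \<le> real b" using rb by simp
  then have "2 powr log 2 (real n + 2) \<le> 2 powr real b" by (intro powr_mono) auto
  then show "real n + 2 \<le> 2 ^ b" by (simp add: powr_realpow)
  have "1 \<le> log 2 (real n + 2)" using assms by simp
  then show "1 \<le> b" using rb by linarith
  have ln2: "1/2 \<le> ln (2::real)" by (rule ln2_ge)
  have lnn: "ln 2 \<le> ln (real n)" using assms by simp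
  have "log 2 (real n + 2) \<le> log 2 (2 * real n)" using assms by simp
  also have "\<dots> = log 2 2 + log 2 (real n)" using assms by (simp add: log_mult)
  also have "\<dots> = 1 + ln (real n) / ln 2" by (simp add: log_def)
  finally have "real b \<le> 2 + ln (real n) / ln 2" using rb by linarith
  also have "ln (real n) / ln 2 \<le> 2 * ln (real n)"
    using ln2 lnn by (simp add: field_simps)
  finally show "real b \<le> 6 * ln (real n)" using ln2 lnn by linarith
qed

lemma space_arith:
  fixes n k d b m t :: nat and \<alpha> \<epsilon> :: real
  assumes "2 \<le> n" "1 \<le> k" "0 < \<alpha>" "\<alpha> < 1" "0 < \<epsilon>" "\<epsilon> < 1"
    "1 \<le> b" "real b \<le> 6 * ln (real n)" "1 \<le> m" "real m \<le> 4097 * real n powr (1 - \<alpha>)"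
    "t = (k + 1) * (2 * b + 3) + 2"
  defines "X \<equiv> real n powr (1 - \<alpha>) * real k * ln (real n / \<epsilon>)"
  shows "real (b * (d + 1) * (2 + 3 * (t * m))) \<le> (real (d + 1) * 17699040 / (1 - \<alpha>)) * X * ln (X + 2)"
proof -
  define y where "y = real n powr (1 - \<alpha>)"
  define l where "l = ln (real n)"
  have y1: "1 \<le> y" unfolding y_def using assms by (intro ge_one_powr_ge_zero) auto
  have "ln 2 \<le> ln (real n)" using assms(1) by simp
  then have l2: "1/2 \<le> l" using ln2_ge unfolding l_def by linarith
  have t12: "t \<le> 12 * k * b"
  proof -
    have A: "(k + 1) * (2 * b + 3) \<le> (2 * k) * (5 * b)" using assms(2,7) by (intro mult_mono) auto
    have B: "1 \<le> k * b" using assms(2,7) by simp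
    have "(2 * k) * (5 * b) = 10 * (k * b)" "12 * k * b = 12 * (k * b)" by simp_all
    then show ?thesis using A B assms(11) by linarith
  qed
  have r5: "2 + 3 * (t * m) \<le> 5 * t * m"
  proof -
    have "1 \<le> t * m" using assms(9,11) by simp
    then show ?thesis by simp
  qed
  have "real (b * (d + 1) * (2 + 3 * (t * m))) \<le> real (b * (d + 1) * (5 * t * m))"
    using r5 by (intro of_nat_mono mult_le_mono2)
  also have "\<dots> = real (d + 1) * 5 * real b * real t * real m" by (simp add: algebra_simps)
  also have "\<dots> \<le> real (d + 1) * 5 * real b * (12 * real k * real b) * (4097 * y)"
  proof -
    have "real t \<le> 12 * real k * real b" using t12 by (metis of_nat_le_iff of_nat_mult of_nat_numeral)
    then show ?thesis using assms(10) unfolding y_def by (intro mult_mono mult_left_mono) auto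
  qed
  also have "\<dots> = real (d + 1) * 245820 * (real k * y) * (real b)^2" by (simp add: power2_eq_square)
  also have "\<dots> \<le> real (d + 1) * 245820 * (real k * y) * (36 * l^2)"
  proof -
    have "(real b)^2 \<le> (6 * l)^2" using assms(8) unfolding l_def by (intro power_mono) auto
    then show ?thesis using y1 by (intro mult_left_mono) (auto simp: power_mult_distrib)
  qed
  also have "\<dots> = real (d + 1) * 8849520 * (real k * y * l) * l" by (simp add: power2_eq_square)
  also have "\<dots> \<le> real (d + 1) * 8849520 * X * (2 * ln (X + 2) / (1 - \<alpha>))"
  proof -
    have lne: "l \<le> ln (real n / \<epsilon>)" unfolding l_def using assms(1,5,6)
      by (simp add: ln_div)
    have kyl: "real k * y * l \<le> X" unfolding X_def y_def[symmetric]
      using lne y1 assms(2) by (simp add: mult.commute mult_left_mono)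
    have "y / 2 + 2 \<le> X + 2"
    proof -
      have "1 * l \<le> real k * l" using l2 assms(2) by (intro mult_right_mono) auto
      then have kl: "1/2 \<le> real k * l" using l2 by linarith
      have "y * (1/2) \<le> y * (real k * l)"
        using y1 kl by (intro mult_left_mono) auto
      then show ?thesis using kyl by (simp add: mult.commute mult.left_commute)
    qed
    then have "ln (y / 2 + 2) \<le> ln (X + 2)" using y1 by simp
    moreover have "ln y \<le> 2 * ln (y / 2 + 2)"
    proof -
      have e: "(y / 2 + 2)^2 = y^2 / 4 + 2 * y + 4" by (simp add: power2_eq_square algebra_simps)
      have "0 \<le> y^2" by simp
      then have "y \<le> (y / 2 + 2)^2" unfolding e using y1 by linarith
      then have "ln y \<le> ln ((y / 2 + 2)^2)" using y1 by simp
      then show ?thesis using y1 by (simp add: ln_realpow)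
    qed
    moreover have "ln y = (1 - \<alpha>) * l" unfolding y_def l_def using assms(1) by simp
    ultimately have "(1 - \<alpha>) * l \<le> 2 * ln (X + 2)" by linarith
    then have l': "l \<le> 2 * ln (X + 2) / (1 - \<alpha>)" using assms(4) by (simp add: field_simps mult.commute)
    have l0: "0 \<le> l" using l2 by simp
    have "0 \<le> real k * y * l" using l0 y1 by simp
    then have X0: "0 \<le> X" using kyl by linarith
    show ?thesis using kyl l' l0 y1 assms(2) X0
      by (intro mult_mono mult_left_mono) auto
  qed
  also have "\<dots> = (real (d + 1) * 17699040 / (1 - \<alpha>)) * X * ln (X + 2)" by simp
  finally show ?thesis .
qed

lemma omega_struct:
  assumes "\<omega> \<in> PiE {..<t} (\<lambda>_. LS {1..n} m)" "n < 2 ^ w"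
  shows "length (concat (map \<omega> [0..<t])) = t * m \<and> (\<forall>a\<in>set (concat (map \<omega> [0..<t])). a < 2^w)"
proof -
  have lc: "\<forall>c<t. length (\<omega> c) = m \<and> set (\<omega> c) \<subseteq> {1..n}" using assms by (auto simp: LS_def PiE_def Pi_def)
  have "length (concat (map \<omega> [0..<t])) = (\<Sum>c\<leftarrow>[0..<t]. length (\<omega> c))" by (simp add: length_concat o_def)
  also have "\<dots> = (\<Sum>c\<leftarrow>[0..<t]. m)" using lc by (intro arg_cong[where f = sum_list] map_cong) auto
  also have "\<dots> = t * m" by (simp add: sum_list_triv)
  finally show ?thesis using lc assms(2) by fastforce
qed

theorem mainTheorem3:
  fixes \<alpha> :: real and d :: nat
  assumes "0 < \<alpha>" and "\<alpha> < 1"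
  shows "\<exists>C c :: real. 0 < C \<and>
    (\<forall>(n::nat) (k::nat) (\<epsilon>::real). 1 \<le> n \<longrightarrow> 1 \<le> k \<longrightarrow> 0 < \<epsilon> \<longrightarrow> \<epsilon> < 1 \<longrightarrow>
      (let X = real n powr (1 - \<alpha>) * real k * ln (real n / \<epsilon>) in
       \<exists>A :: salg.
         space_bounded A n ((n + 1) ^ d) (C * X * ln (X + 2) powr c) \<and>
         (\<forall>s. valid_stream n s \<and> length s \<le> (n + 1) ^ d \<and> 0 < mtot n s \<and>
              (\<forall>i\<in>{1..n}. pvec n s i \<le> \<epsilon>\<^sup>2 / real n powr \<alpha>) \<longrightarrow>
            2 / 3 \<le> measure_pmf.prob (alg_output A s)
                 {f. f \<in> hist_set n k \<and> err n (pvec n s) f \<le> opt_err n k (pvec n s) + \<epsilon>})))"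
proof -
  define C0 where "C0 = real (d + 1) * 17699040 / (1 - \<alpha>)"
  have C0: "0 < C0" using assms by (simp add: C0_def)
  show ?thesis
  proof (rule exI[of _ C0], rule exI[of _ 1], intro conjI allI impI)
    show "0 < C0" by (rule C0)
    fix n k :: nat and \<epsilon> :: real
    assume n1: "1 \<le> n" and k1: "1 \<le> k" and e0: "0 < \<epsilon>" and e1: "\<epsilon> < 1"
    define X where "X = real n powr (1 - \<alpha>) * real k * ln (real n / \<epsilon>)"
    have "1 < real n / \<epsilon>" using n1 e0 e1 by (simp add: field_simps)
    then have "0 < ln (real n / \<epsilon>)" by simp
    then have X0: "0 \<le> X" unfolding X_def using k1 by simp
    have lnX: "ln (X + 2) powr 1 = ln (X + 2)" using X0 by (intro powr_one) simp
    have S0: "0 \<le> C0 * X * ln (X + 2) powr 1" using C0 X0 lnX by simp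
    have main: "\<exists>A :: salg.
         space_bounded A n ((n + 1) ^ d) (C0 * X * ln (X + 2) powr 1) \<and>
         (\<forall>s. valid_stream n s \<and> length s \<le> (n + 1) ^ d \<and> 0 < mtot n s \<and>
              (\<forall>i\<in>{1..n}. pvec n s i \<le> \<epsilon>\<^sup>2 / real n powr \<alpha>) \<longrightarrow>
            2 / 3 \<le> measure_pmf.prob (alg_output A s)
                 {f. f \<in> hist_set n k \<and> err n (pvec n s) f \<le> opt_err n k (pvec n s) + \<epsilon>})"
    proof (cases "real n * \<epsilon>\<^sup>2 / real n powr \<alpha> < 1")
      case True
      show ?thesis
      proof (intro exI[of _ triv] conjI allI impI)
        show "space_bounded triv n ((n + 1) ^ d) (C0 * X * ln (X + 2) powr 1)" by (rule space_triv[OF S0])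
        fix s assume H: "valid_stream n s \<and> length s \<le> (n + 1) ^ d \<and> 0 < mtot n s \<and>
              (\<forall>i\<in>{1..n}. pvec n s i \<le> \<epsilon>\<^sup>2 / real n powr \<alpha>)"
        have "1 = (\<Sum>i=1..n. pvec n s i)" using pvec_props(2)[of n s] H by simp
        also have "\<dots> \<le> (\<Sum>i=1..n. \<epsilon>\<^sup>2 / real n powr \<alpha>)" using H by (intro sum_mono) auto
        also have "\<dots> = real n * \<epsilon>\<^sup>2 / real n powr \<alpha>" by simp
        finally show "2 / 3 \<le> measure_pmf.prob (alg_output triv s)
                 {f. f \<in> hist_set n k \<and> err n (pvec n s) f \<le> opt_err n k (pvec n s) + \<epsilon>}"
          using True by linarith
      qed
    next
      case False
      have n2: "2 \<le> n"
      proof (rule ccontr)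
        assume "\<not> 2 \<le> n" then have "n = 1" using n1 by simp
        then have "real n * \<epsilon>\<^sup>2 / real n powr \<alpha> = \<epsilon>^2" by simp
        moreover have "\<epsilon>^2 < 1" using e0 e1 by (simp add: power_less_one_iff abs_less_iff)
        ultimately show False using False by simp
      qed
      define y where "y = real n powr (1 - \<alpha>)"
      define \<delta> where "\<delta> = \<epsilon>\<^sup>2 / real n powr \<alpha>"
      define h where "h = \<epsilon> / (8 * real n)"
      define J where "J = nat \<lfloor>\<delta> / h\<rfloor>"
      define b where "b = nat \<lceil>log 2 (real n + 2)\<rceil>"
      define m where "m = nat \<lceil>4096 * y\<rceil>"
      define t where "t = (k + 1) * (2 * b + 3) + 2"
      define w where "w = b * (d + 1)"
      define r where "r = 2 + 3 * (t * m)"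
      note bb = b_bounds[OF n2, folded b_def]
      have y1: "1 \<le> y" unfolding y_def using assms n1 by (intro ge_one_powr_ge_zero) auto
      have na: "1 \<le> real n powr \<alpha>" using assms n1 by (intro ge_one_powr_ge_zero) auto
      have yeq: "y = real n / real n powr \<alpha>" unfolding y_def using n1 by (simp add: powr_diff)
      have m1: "1 \<le> m" using y1 unfolding m_def by linarith
      have mge: "4096 * y \<le> real m" unfolding m_def by linarith
      have mle: "real m \<le> 4097 * y"
      proof -
        have "real m \<le> 4096 * y + 1" unfolding m_def using y1 by linarith
        then show ?thesis using y1 by linarith
      qed
      have h0: "0 < h" using e0 n1 by (simp add: h_def)
      have d0: "0 \<le> \<delta>" by (simp add: \<delta>_def)
      have nh: "real n * h \<le> \<epsilon> / 8" using n1 by (simp add: h_def)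
      have nd: "real n * \<delta> * 4096 \<le> \<epsilon>^2 * real m"
      proof -
        have "real n * \<delta> * 4096 = \<epsilon>^2 * (4096 * y)" by (simp add: \<delta>_def yeq)
        also have "\<dots> \<le> \<epsilon>^2 * real m" using mge by (intro mult_left_mono) auto
        finally show ?thesis .
      qed
      have J8: "J \<le> 8 * n"
      proof -
        have "\<delta> / h = 8 * real n * \<epsilon> / real n powr \<alpha>" using e0 n1 by (simp add: \<delta>_def h_def power2_eq_square field_simps)
        also have "\<dots> \<le> 8 * real n * \<epsilon>" using na e0 by (simp add: divide_le_eq mult_le_cancel_left1 field_simps)
        also have "\<dots> \<le> 8 * real n * 1" using e1 by (intro mult_left_mono) auto
        finally have "real J \<le> 8 * real n" unfolding J_def using d0 h0 by linarith
        then show ?thesis by linarith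
      qed
      have pow_b: "n + 2 \<le> 2 ^ b" using bb(1) by (metis of_nat_le_iff of_nat_add of_nat_numeral of_nat_power)
      have cardC: "3 * real (card (Cand n k h J)) \<le> 2 ^ t"
      proof -
        have "card (Cand n k h J) \<le> ((n + 1) * (J + 1)) ^ (k + 1)" using Cand_finite_card by blast
        also have "\<dots> \<le> (2 ^ (2 * b + 3)) ^ (k + 1)"
        proof (rule power_mono)
          have "(n + 1) * (J + 1) \<le> (n + 1) * (8 * (n + 1))" using J8 by (intro mult_le_mono2) simp
          also have "\<dots> = 8 * ((n + 1) * (n + 1))" by (simp add: algebra_simps)
          also have "\<dots> \<le> 8 * (2 ^ b * 2 ^ b)" using pow_b by (intro mult_le_mono2 mult_le_mono) auto
          also have "\<dots> = 2 ^ (2 * b + 3)" by (simp only: mult_2 power_add) simp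
          finally show "(n + 1) * (J + 1) \<le> 2 ^ (2 * b + 3)" .
        qed simp
        also have "\<dots> = 2 ^ ((2 * b + 3) * (k + 1))" by (rule power_mult[symmetric])
        finally have "3 * card (Cand n k h J) \<le> 3 * 2 ^ ((2 * b + 3) * (k + 1))" by simp
        also have "\<dots> \<le> 2 ^ t"
        proof -
          have "(2::nat) ^ t = 2 ^ ((2 * b + 3) * (k + 1)) * 2 ^ 2"
            unfolding t_def by (simp only: power_add mult.commute[of "k + 1"])
          then show ?thesis by simp
        qed
        finally have "3 * card (Cand n k h J) \<le> (2::nat) ^ t" .
        then have "real (3 * card (Cand n k h J)) \<le> real ((2::nat) ^ t)" by (rule of_nat_mono)
        then show ?thesis by simp
      qed
      have b1: "1 \<le> b" by (rule bb(2))
      have nw: "n < 2 ^ w"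
      proof -
        have "2 ^ b \<le> (2::nat) ^ w" unfolding w_def by (intro power_increasing) auto
        then show ?thesis using pow_b by linarith
      qed
      have Lw: "(n + 1) ^ d < 2 ^ w"
      proof -
        have "(n + 1) ^ d \<le> (n + 2) ^ d" by (intro power_mono) auto
        also have "\<dots> < (n + 2) ^ (d + 1)" by (intro power_strict_increasing) auto
        also have "\<dots> \<le> (2 ^ b) ^ (d + 1)" using pow_b by (intro power_mono) auto
        also have "\<dots> = 2 ^ w" unfolding w_def by (rule power_mult[symmetric])
        finally show ?thesis .
      qed
      define \<Omega> where "\<Omega> = PiE {..<t} (\<lambda>_. LS {1..n} m)"
      have fO: "finite \<Omega>" unfolding \<Omega>_def by (intro finite_PiE finite_LS) auto
      have neO: "\<Omega> \<noteq> {}" unfolding \<Omega>_def using LS_nonempty[OF n1, of m] by (auto simp: PiE_eq_empty_iff)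
      show ?thesis
      proof (intro exI[of _ "mkalg w r t (pmf_of_set \<Omega>) (OUTF n m t (Cand n k h J))"] conjI allI impI)
        show "space_bounded (mkalg w r t (pmf_of_set \<Omega>) (OUTF n m t (Cand n k h J))) n ((n + 1) ^ d)
            (C0 * X * ln (X + 2) powr 1)"
        proof (rule space_mkalg[where R = "t * m"])
          show "\<forall>\<omega>\<in>set_pmf (pmf_of_set \<Omega>). length (concat (map \<omega> [0..<t])) = t * m \<and>
              (\<forall>a\<in>set (concat (map \<omega> [0..<t])). a < 2 ^ w)"
            using fO neO omega_struct[OF _ nw] by (auto simp: \<Omega>_def)
          show "r = 2 + 3 * (t * m)" by (simp add: r_def)
          show "(n + 1) ^ d < 2 ^ w" by (rule Lw)
          have "real (w * r) \<le> C0 * X * ln (X + 2)"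
            unfolding w_def r_def C0_def X_def
            by (rule space_arith[OF n2 k1 assms e0 e1 b1 bb(3) m1 mle[unfolded y_def] t_def])
          then show "real (w * r) \<le> C0 * X * ln (X + 2) powr 1" using lnX by simp
        qed
        fix s assume H: "valid_stream n s \<and> length s \<le> (n + 1) ^ d \<and> 0 < mtot n s \<and>
              (\<forall>i\<in>{1..n}. pvec n s i \<le> \<epsilon>\<^sup>2 / real n powr \<alpha>)"
        show "2 / 3 \<le> measure_pmf.prob (alg_output (mkalg w r t (pmf_of_set \<Omega>) (OUTF n m t (Cand n k h J))) s)
                 {f. f \<in> hist_set n k \<and> err n (pvec n s) f \<le> opt_err n k (pvec n s) + \<epsilon>}"
          unfolding \<Omega>_def
          by (rule alg_correct[OF n1 m1 k1 e0 e1 h0 d0 nh J_def nd cardC nw Lw r_def])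
            (use H in \<open>auto simp: \<delta>_def\<close>)
      qed
    qed
    then show "let X = real n powr (1 - \<alpha>) * real k * ln (real n / \<epsilon>) in
       \<exists>A :: salg.
         space_bounded A n ((n + 1) ^ d) (C0 * X * ln (X + 2) powr 1) \<and>
         (\<forall>s. valid_stream n s \<and> length s \<le> (n + 1) ^ d \<and> 0 < mtot n s \<and>
              (\<forall>i\<in>{1..n}. pvec n s i \<le> \<epsilon>\<^sup>2 / real n powr \<alpha>) \<longrightarrow>
            2 / 3 \<le> measure_pmf.prob (alg_output A s)
                 {f. f \<in> hist_set n k \<and> err n (pvec n s) f \<le> opt_err n k (pvec n s) + \<epsilon>})"
      by (simp only: Let_def X_def)
  qed
qed

end
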